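(* Let $\mathcal C$ be a multi-Reedy category. Then $\Theta\mathcal C$ is a multi-Reedy category with inverse subcategory $(\Theta\mathcal C)^-$, direct sub-multicategory $(\Theta\mathcal C)^+( * )$ and degree function $\deg([m](c_1,\dots,c_m))=m+\sum_{i=1}^m\deg(c_i)$, as defined in the context. In particular, $\Theta\mathcal C$ admits the structure of a Reedy category.
   Context: Multimorphisms: for a small category $\mathcal C$ and objects $c,d_1,\dots,d_m$ ($m\ge0$), a multimorphism $c\to d_1,\dots,d_m$ is a tuple $(\alpha_s\colon c\to d_s)_{s=1..m}$ of morphisms of $\mathcal C$ (for $m=0$ there is exactly one). These form a symmetric multicategory $\mathcal C( * )$ (composition: precomposition with a morphism, and postcomposition of each output $d_s$ with a multimorphism out of $d_s$, collecting all outputs; outputs can be permuted); a wide sub-multicategory contains all objects and identities and is closed under these operations. A multi-Reedy category is a small category $\mathcal C$ with a wide subcategory $\mathcal C^-$, a wide sub-multicategory $\mathcal C^+( * )\subseteq\mathcal C( * )$, and $\deg\colon\mathrm{ob}(\mathcal C)\to\mathbb N$ such that: (1) every multimorphism $\alpha$ of $\mathcal C( * )$ factors uniquely as $\alpha=\alpha^+\alpha^-$ with $\alpha^-\colon c\to x$ a morphism in $\mathcal C^-$ and $\alpha^+\colon x\to d_1,\dots,d_m$ in $\mathcal C^+( * )$; (2) every multimorphism $c\to d_1,\dots,d_m$ in $\mathcal C^+( * )$ satisfies $\deg(c)\le\sum_i\deg(d_i)$; a morphism $c\to d$ in $\mathcal C^+=\mathcal C\cap\mathcal C^+( * )$ has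 $\deg c=\deg d$ iff it is an identity; a morphism $c\to d$ in $\mathcal C^-$ has $\deg c\ge\deg d$, with equality iff it is an identity. A Reedy category is the analogous structure with only single-output morphisms (unique factorization $\alpha=\alpha^+\alpha^-$, $\deg$ non-decreasing along $\mathcal C^+$, non-increasing along $\mathcal C^-$, equality iff identity). $\Delta$ is the category of the totally ordered sets $[n]=\{0<1<\dots<n\}$, $n\ge0$, and order-preserving maps. $\Delta^-$ is the subcategory of surjections; $\Delta^+( * )$ consists of the multimorphisms $(\alpha_s\colon[m]\to[n_s])_s$ forming a monomorphic family (if $\alpha_s\beta=\alpha_s\beta'$ for all $s$ then $\beta=\beta'$). $\Theta\mathcal C$: objects are $[m](c_1,\dots,c_m)$ with $m\ge0$ and $c_i\in\mathrm{ob}\,\mathcal C$. A morphism $[m](c_1,\dots,c_m)\to[n](d_1,\dots,d_n)$ is $(\alpha,\{f_i\})$ where $\alpha\colon[m]\to[n]$ is in $\Delta$ and, for each $i=1,\dots,m$, $f_i=(f_{ij}\colon c_i\to d_j)_{\alpha(i-1)<j\le\alpha(i)}$ is a multimorphism of $\mathcal C( * )$. Composition: $(\beta,\{g_j\})\circ(\alpha,\{f_i\})=(\beta\alpha,\{h_i\})$ with $h_{ik}=g_{jk}f_{ij}$ for $\alpha(i-1)<j\le\alpha(i)$, $\beta(j-1)<k\le\beta(j)$. $(\Theta\mathcal C)^-$: morphisms $(\alpha,\{f_i\})$ such that $\alpha\in\Delta^-$ and, for each $i$ with $\alpha(i-1)<\alpha(i)$, the morphism $f_i\colon c_i\to d_{\alpha(i)}$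 is in $\mathcal C^-$. $(\Theta\mathcal C)^+( * )$: multimorphisms $(f_s)_{s=1..u}$ with $f_s=(\alpha_s,\{f_{si}\})\colon[m](c_1,\dots,c_m)\to[n_s](d_{s1},\dots,d_{sn_s})$ such that $(\alpha_s)_s\colon[m]\to[n_1],\dots,[n_u]$ is in $\Delta^+( * )$ and, for each $i=1,\dots,m$, the multimorphism $(f_{sij}\colon c_i\to d_{sj})_{s=1..u,\ \alpha_s(i-1)<j\le\alpha_s(i)}$ is in $\mathcal C^+( * )$. *)

theory Defs
  imports "HOL-Library.Multiset"
begin

text \<open>A small category: a set of objects, a set of arrows, domain, codomain,
  composition (Cmp g f = g after f) and identities.\<close>

record ('o, 'm) cat =
  Ob  :: "'o set"
  Ar  :: "'m set"
  Dom :: "'m \<Rightarrow> 'o"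
  Cod :: "'m \<Rightarrow> 'o"
  Cmp :: "'m \<Rightarrow> 'm \<Rightarrow> 'm"
  Id  :: "'o \<Rightarrow> 'm"

definition is_category :: "('o, 'm) cat \<Rightarrow> bool" where
  "is_category C \<longleftrightarrow>
     (\<forall>f\<in>Ar C. Dom C f \<in> Ob C \<and> Cod C f \<in> Ob C) \<and>
     (\<forall>c\<in>Ob C. Id C c \<in> Ar C \<and> Dom C (Id C c) = c \<and> Cod C (Id C c) = c) \<and>
     (\<forall>f\<in>Ar C. \<forall>g\<in>Ar C. Cod C f = Dom C g \<longrightarrow>
        Cmp C g f \<in> Ar C \<and> Dom C (Cmp C g f) = Dom C f \<and> Cod C (Cmp C g f) = Cod C g) \<and>
     (\<forall>f\<in>Ar C. Cmp C (Id C (Cod C f)) f = f \<and> Cmp C f (Id C (Dom C f)) = f) \<and>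
     (\<forall>f\<in>Ar C. \<forall>g\<in>Ar C. \<forall>h\<in>Ar C. Cod C f = Dom C g \<longrightarrow> Cod C g = Dom C h \<longrightarrow>
        Cmp C h (Cmp C g f) = Cmp C (Cmp C h g) f)"

definition wide_subcat :: "('o, 'm) cat \<Rightarrow> 'm set \<Rightarrow> bool" where
  "wide_subcat C M \<longleftrightarrow> M \<subseteq> Ar C \<and> (\<forall>c\<in>Ob C. Id C c \<in> M) \<and>
     (\<forall>f\<in>M. \<forall>g\<in>M. Cod C f = Dom C g \<longrightarrow> Cmp C g f \<in> M)"

text \<open>A multimorphism c \<rightarrow> d_1,...,d_m is represented as the pair (c, [\<alpha>_1,...,\<alpha>_m])
  with \<alpha>_s : c \<rightarrow> d_s; its targets are the list of codomains.\<close>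

definition mmor :: "('o, 'm) cat \<Rightarrow> ('o \<times> 'm list) set" where
  "mmor C = {(c, fs). c \<in> Ob C \<and> (\<forall>f\<in>set fs. f \<in> Ar C \<and> Dom C f = c)}"

text \<open>Composition in C(*): postcompose each output f_s with a multimorphism
  (given by the list gss!s of morphisms out of Cod f_s), collecting all outputs.\<close>

definition mcomp :: "('o, 'm) cat \<Rightarrow> 'o \<times> 'm list \<Rightarrow> 'm list list \<Rightarrow> 'o \<times> 'm list" where
  "mcomp C cf gss = (fst cf, concat (map (\<lambda>(f, gs). map (\<lambda>g. Cmp C g f) gs) (zip (snd cf) gss)))"

definition wide_submulticat :: "('o, 'm) cat \<Rightarrow> ('o \<times> 'm list) set \<Rightarrow> bool" where
  "wide_submulticat C P \<longleftrightarrow>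
     P \<subseteq> mmor C \<and>
     (\<forall>c\<in>Ob C. (c, [Id C c]) \<in> P) \<and>
     (\<forall>c fs gss. (c, fs) \<in> P \<longrightarrow> length gss = length fs \<longrightarrow>
        (\<forall>s<length fs. (Cod C (fs ! s), gss ! s) \<in> P) \<longrightarrow> mcomp C (c, fs) gss \<in> P) \<and>
     (\<forall>c fs gs. (c, fs) \<in> P \<longrightarrow> mset gs = mset fs \<longrightarrow> (c, gs) \<in> P)"

definition multi_reedy ::
  "('o, 'm) cat \<Rightarrow> 'm set \<Rightarrow> ('o \<times> 'm list) set \<Rightarrow> ('o \<Rightarrow> nat) \<Rightarrow> bool" where
  "multi_reedy C M P deg \<longleftrightarrow>
     is_category C \<and> wide_subcat C M \<and> wide_submulticat C P \<and>
     (\<forall>(c, fs)\<in>mmor C. \<exists>!(a, ps). a \<in> M \<and> Dom C a = c \<and> (Cod C a, ps) \<in> P \<and>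
         map (Cod C) ps = map (Cod C) fs \<and> fs = map (\<lambda>p. Cmp C p a) ps) \<and>
     (\<forall>(c, fs)\<in>P. deg c \<le> sum_list (map (\<lambda>f. deg (Cod C f)) fs)) \<and>
     (\<forall>f\<in>Ar C. (Dom C f, [f]) \<in> P \<longrightarrow>
         (deg (Dom C f) = deg (Cod C f) \<longleftrightarrow> f = Id C (Dom C f))) \<and>
     (\<forall>f\<in>M. deg (Cod C f) \<le> deg (Dom C f) \<and>
         (deg (Dom C f) = deg (Cod C f) \<longleftrightarrow> f = Id C (Dom C f)))"

definition reedy :: "('o, 'm) cat \<Rightarrow> 'm set \<Rightarrow> 'm set \<Rightarrow> ('o \<Rightarrow> nat) \<Rightarrow> bool" where
  "reedy C Mm Mp deg \<longleftrightarrow>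
     is_category C \<and> wide_subcat C Mm \<and> wide_subcat C Mp \<and>
     (\<forall>f\<in>Ar C. \<exists>!(a, p). a \<in> Mm \<and> p \<in> Mp \<and> Dom C a = Dom C f \<and>
         Cod C a = Dom C p \<and> Cod C p = Cod C f \<and> f = Cmp C p a) \<and>
     (\<forall>f\<in>Mp. deg (Dom C f) \<le> deg (Cod C f) \<and>
         (deg (Dom C f) = deg (Cod C f) \<longleftrightarrow> f = Id C (Dom C f))) \<and>
     (\<forall>f\<in>Mm. deg (Cod C f) \<le> deg (Dom C f) \<and>
         (deg (Dom C f) = deg (Cod C f) \<longleftrightarrow> f = Id C (Dom C f)))"

text \<open>An order preserving map [m] \<rightarrow> [n] is encoded as the list of its values
  [\<alpha>(0), ..., \<alpha>(m)].\<close>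

definition delta_mor :: "nat \<Rightarrow> nat \<Rightarrow> nat list \<Rightarrow> bool" where
  "delta_mor m n \<alpha> \<longleftrightarrow> length \<alpha> = Suc m \<and> (\<forall>i<m. \<alpha> ! i \<le> \<alpha> ! Suc i) \<and> (\<forall>i\<le>m. \<alpha> ! i \<le> n)"

definition mono_family :: "nat \<Rightarrow> nat list list \<Rightarrow> bool" where
  "mono_family m \<alpha>s \<longleftrightarrow>
     (\<forall>k \<beta> \<beta>'. delta_mor k m \<beta> \<longrightarrow> delta_mor k m \<beta>' \<longrightarrow>
        (\<forall>\<alpha>\<in>set \<alpha>s. map (\<lambda>b. \<alpha> ! b) \<beta> = map (\<lambda>b. \<alpha> ! b) \<beta>') \<longrightarrow> \<beta> = \<beta>')"

text \<open>A morphism [m](c_1..c_m) \<rightarrow> [n](d_1..d_n) is (\<alpha>, {f_i}); with 0-indexed lists,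
  tcomp ! i lists the morphisms f_{i+1,j} for j = \<alpha>(i)+1 .. \<alpha>(i+1), in order;
  the k-th entry goes c_{i+1} \<rightarrow> d_{\<alpha>(i)+k+1}, i.e. tgt ! (\<alpha>!i + k).\<close>

record ('o, 'm) tmor =
  tsrc  :: "'o list"
  ttgt  :: "'o list"
  tmap  :: "nat list"
  tcomp :: "'m list list"

definition theta_arrows :: "('o, 'm) cat \<Rightarrow> ('o, 'm) tmor set" where
  "theta_arrows C = {F.
     set (tsrc F) \<subseteq> Ob C \<and> set (ttgt F) \<subseteq> Ob C \<and>
     delta_mor (length (tsrc F)) (length (ttgt F)) (tmap F) \<and>
     length (tcomp F) = length (tsrc F) \<and>
     (\<forall>i<length (tsrc F).
        length (tcomp F ! i) = tmap F ! Suc i - tmap F ! i \<and>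
        (\<forall>k<length (tcomp F ! i).
           tcomp F ! i ! k \<in> Ar C \<and> Dom C (tcomp F ! i ! k) = tsrc F ! i \<and>
           Cod C (tcomp F ! i ! k) = ttgt F ! (tmap F ! i + k)))}"

definition theta_cmp :: "('o, 'm) cat \<Rightarrow> ('o, 'm) tmor \<Rightarrow> ('o, 'm) tmor \<Rightarrow> ('o, 'm) tmor" where
  "theta_cmp C G F =
     \<lparr> tsrc = tsrc F, ttgt = ttgt G,
       tmap = map (\<lambda>a. tmap G ! a) (tmap F),
       tcomp = map (\<lambda>i. concat (map (\<lambda>(f, j). map (\<lambda>g. Cmp C g f) (tcomp G ! j))
                     (zip (tcomp F ! i) [tmap F ! i ..< tmap F ! Suc i])))
                 [0 ..< length (tsrc F)] \<rparr>"

definition theta_id :: "('o, 'm) cat \<Rightarrow> 'o list \<Rightarrow> ('o, 'm) tmor" where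
  "theta_id C cs = \<lparr> tsrc = cs, ttgt = cs, tmap = [0 ..< Suc (length cs)],
                     tcomp = map (\<lambda>c. [Id C c]) cs \<rparr>"

definition Theta :: "('o, 'm) cat \<Rightarrow> ('o list, ('o, 'm) tmor) cat" where
  "Theta C = \<lparr> Ob = {cs. set cs \<subseteq> Ob C}, Ar = theta_arrows C, Dom = tsrc, Cod = ttgt,
               Cmp = theta_cmp C, Id = theta_id C \<rparr>"

definition ThetaMinus :: "('o, 'm) cat \<Rightarrow> 'm set \<Rightarrow> ('o, 'm) tmor set" where
  "ThetaMinus C M = {F \<in> theta_arrows C.
     set (tmap F) = {0 .. length (ttgt F)} \<and>
     (\<forall>i<length (tsrc F). tmap F ! i < tmap F ! Suc i \<longrightarrow> tcomp F ! i ! 0 \<in> M)}"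

text \<open>(\<Theta>C)^+(*): the family of underlying \<alpha>_s is in \<Delta>^+(*), and for each i the
  multimorphism (f_{sij})_{s,j} out of c_i is in C^+(*).\<close>

definition ThetaPlus :: "('o, 'm) cat \<Rightarrow> ('o \<times> 'm list) set \<Rightarrow> ('o list \<times> ('o, 'm) tmor list) set" where
  "ThetaPlus C P = {(cs, Fs) \<in> mmor (Theta C).
     mono_family (length cs) (map tmap Fs) \<and>
     (\<forall>i<length cs. (cs ! i, concat (map (\<lambda>F. tcomp F ! i) Fs)) \<in> P)}"

definition ThetaDeg :: "('o \<Rightarrow> nat) \<Rightarrow> 'o list \<Rightarrow> nat" where
  "ThetaDeg deg cs = length cs + sum_list (map deg cs)"

end

theory Submission
  imports Defs
begin


lemma upt_split3: "i \<le> j \<Longrightarrow> j \<le> k \<Longrightarrow> [i..<k] = [i..<j] @ [j..<k]"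
  using upt_add_eq_append[of i j "k - j"] by simp

lemma mono_chain:
  assumes "\<forall>i<m. (\<alpha>::nat list) ! i \<le> \<alpha> ! Suc i" "a \<le> b" "b \<le> m"
  shows "\<alpha> ! a \<le> \<alpha> ! b"
  using assms(2,3)
proof (induction b)
  case 0 then show ?case by simp
next
  case (Suc b)
  show ?case
  proof (cases "a = Suc b")
    case True then show ?thesis by simp
  next
    case False
    then have "a \<le> b" using Suc.prems by simp
    then have "\<alpha> ! a \<le> \<alpha> ! b" using Suc by simp
    also have "\<alpha> ! b \<le> \<alpha> ! Suc b" using assms(1) Suc.prems by simp
    finally show ?thesis .
  qed
qed

definition ix :: "nat list \<Rightarrow> nat \<Rightarrow> nat" where
  "ix \<alpha> k = (LEAST i. k < \<alpha> ! Suc i)"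

lemma ix_eq:
  assumes mono: "\<forall>i<m. \<alpha> ! i \<le> \<alpha> ! Suc i" and "i < m" "\<alpha> ! i \<le> k" "k < \<alpha> ! Suc i"
  shows "ix \<alpha> k = i"
  unfolding ix_def
proof (rule Least_equality)
  show "k < \<alpha> ! Suc i" by fact
  fix y assume y: "k < \<alpha> ! Suc y"
  show "i \<le> y"
  proof (rule ccontr)
    assume "\<not> i \<le> y"
    then have "Suc y \<le> i" by simp
    then have "\<alpha> ! Suc y \<le> \<alpha> ! i" using mono_chain[OF mono] \<open>i<m\<close> by simp
    then show False using y \<open>\<alpha> ! i \<le> k\<close> by simp
  qed
qed

lemma ix_props:
  assumes mono: "\<forall>i<m. \<alpha> ! i \<le> \<alpha> ! Suc i" and "\<alpha> ! 0 \<le> k" "k < \<alpha> ! m"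
  shows "ix \<alpha> k < m \<and> \<alpha> ! ix \<alpha> k \<le> k \<and> k < \<alpha> ! Suc (ix \<alpha> k)"
proof -
  have m0: "m > 0" using assms(2,3) by (cases m) auto
  have ex: "k < \<alpha> ! Suc (m - 1)" using m0 assms(3) by simp
  have a: "k < \<alpha> ! Suc (ix \<alpha> k)" unfolding ix_def by (rule LeastI[where P="\<lambda>i. k < \<alpha> ! Suc i", OF ex])
  have b: "ix \<alpha> k \<le> m - 1" unfolding ix_def by (rule Least_le[where P="\<lambda>i. k < \<alpha> ! Suc i", OF ex])
  have c: "\<alpha> ! ix \<alpha> k \<le> k"
  proof (cases "ix \<alpha> k")
    case 0 then show ?thesis using assms(2) by simp
  next
    case (Suc j)
    have "j < ix \<alpha> k" using Suc by simp
    then have "\<not> k < \<alpha> ! Suc j" unfolding ix_def by (rule not_less_Least)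
    then show ?thesis using Suc by simp
  qed
  show ?thesis using a b c m0 by auto
qed

lemma ix_range:
  assumes mono: "\<forall>i<m. \<alpha> ! i \<le> \<alpha> ! Suc i" and "a \<le> b" "b \<le> m" "\<alpha> ! a \<le> k" "k < \<alpha> ! b"
  shows "a \<le> ix \<alpha> k \<and> ix \<alpha> k < b"
proof -
  have "\<alpha> ! 0 \<le> \<alpha> ! a" using mono_chain[OF mono, of 0 a] assms by simp
  moreover have "\<alpha> ! b \<le> \<alpha> ! m" using mono_chain[OF mono, of b m] assms by simp
  ultimately have p: "ix \<alpha> k < m \<and> \<alpha> ! ix \<alpha> k \<le> k \<and> k < \<alpha> ! Suc (ix \<alpha> k)"
    using ix_props[OF mono] assms by simp
  have "a \<le> ix \<alpha> k"
  proof (rule ccontr)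
    assume "\<not> a \<le> ix \<alpha> k"
    then have "\<alpha> ! Suc (ix \<alpha> k) \<le> \<alpha> ! a" using mono_chain[OF mono] assms by simp
    then show False using p assms by simp
  qed
  moreover have "ix \<alpha> k < b"
  proof (rule ccontr)
    assume "\<not> ix \<alpha> k < b"
    then have "\<alpha> ! b \<le> \<alpha> ! ix \<alpha> k" using mono_chain[OF mono] p by simp
    then show False using p assms by simp
  qed
  ultimately show ?thesis by simp
qed

lemma ix_block:
  assumes mono: "\<forall>i<m. \<alpha> ! i \<le> \<alpha> ! Suc i" and "i < m" "\<alpha> ! i \<le> k" "k < \<alpha> ! Suc i"
  shows "ix \<alpha> k = i"
  using ix_eq[OF assms] .

lemma concat_blocks:
  assumes mono: "\<forall>i<n. \<beta> ! i \<le> \<beta> ! Suc i" and "a \<le> b" "b \<le> n"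
  shows "concat (map (\<lambda>j. map (h j) [\<beta>!j..<\<beta>!Suc j]) [a..<b]) = map (\<lambda>k. h (ix \<beta> k) k) [\<beta>!a..<\<beta>!b]"
  using assms(2,3)
proof (induction b)
  case 0 then show ?case by simp
next
  case (Suc b)
  show ?case
  proof (cases "a = Suc b")
    case True then show ?thesis by simp
  next
    case False
    then have ab: "a \<le> b" using Suc.prems by simp
    have IH: "concat (map (\<lambda>j. map (h j) [\<beta>!j..<\<beta>!Suc j]) [a..<b]) = map (\<lambda>k. h (ix \<beta> k) k) [\<beta>!a..<\<beta>!b]"
      using Suc.IH ab Suc.prems by simp
    have s1: "\<beta>!a \<le> \<beta>!b" using mono_chain[OF mono, of a b] ab Suc.prems by simp
    have s2: "\<beta>!b \<le> \<beta>!Suc b" using mono Suc.prems by simp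
    have split: "[\<beta>!a..<\<beta>!Suc b] = [\<beta>!a..<\<beta>!b] @ [\<beta>!b..<\<beta>!Suc b]"
      using upt_split3[OF s1 s2] .
    have last: "map (\<lambda>k. h (ix \<beta> k) k) [\<beta>!b..<\<beta>!Suc b] = map (h b) [\<beta>!b..<\<beta>!Suc b]"
    proof (rule map_cong)
      fix x assume "x \<in> set [\<beta>!b..<\<beta>!Suc b]"
      then have "ix \<beta> x = b" by (intro ix_eq[OF mono]) (use Suc.prems in auto)
      then show "h (ix \<beta> x) x = h b x" by simp
    qed simp
    show ?thesis using IH split last ab by simp
  qed
qed

definition mk :: "'o list \<Rightarrow> 'o list \<Rightarrow> nat list \<Rightarrow> (nat \<Rightarrow> 'm) \<Rightarrow> ('o,'m) tmor" where
  "mk cs ds \<alpha> g = \<lparr>tsrc = cs, ttgt = ds, tmap = \<alpha>,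
      tcomp = map (\<lambda>i. map g [\<alpha>!i..<\<alpha>!Suc i]) [0..<length cs]\<rparr>"

definition cf :: "('o,'m) tmor \<Rightarrow> nat \<Rightarrow> 'm" where
  "cf F k = tcomp F ! ix (tmap F) k ! (k - tmap F ! ix (tmap F) k)"

lemma arrowD:
  assumes "F \<in> theta_arrows C"
  shows "set (tsrc F) \<subseteq> Ob C" "set (ttgt F) \<subseteq> Ob C"
    "delta_mor (length (tsrc F)) (length (ttgt F)) (tmap F)"
    "length (tcomp F) = length (tsrc F)"
    "\<And>i. i < length (tsrc F) \<Longrightarrow> length (tcomp F ! i) = tmap F ! Suc i - tmap F ! i"
    "\<And>i k. i < length (tsrc F) \<Longrightarrow> k < length (tcomp F ! i) \<Longrightarrow>
        tcomp F ! i ! k \<in> Ar C \<and> Dom C (tcomp F ! i ! k) = tsrc F ! i \<and>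
           Cod C (tcomp F ! i ! k) = ttgt F ! (tmap F ! i + k)"
  using assms unfolding theta_arrows_def by auto

lemma arrow_mono:
  assumes "F \<in> theta_arrows C"
  shows "\<forall>i<length (tsrc F). tmap F ! i \<le> tmap F ! Suc i"
  using arrowD(3)[OF assms] unfolding delta_mor_def by auto

lemma arrow_len: "F \<in> theta_arrows C \<Longrightarrow> length (tmap F) = Suc (length (tsrc F))"
  using arrowD(3) unfolding delta_mor_def by blast

lemma arrow_bound: "F \<in> theta_arrows C \<Longrightarrow> i \<le> length (tsrc F) \<Longrightarrow> tmap F ! i \<le> length (ttgt F)"
  using arrowD(3) unfolding delta_mor_def by blast

lemma arrow_tcomp:
  assumes F: "F \<in> theta_arrows C" and i: "i < length (tsrc F)"
  shows "tcomp F ! i = map (cf F) [tmap F!i..<tmap F!Suc i]"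
proof (rule nth_equalityI)
  show "length (tcomp F ! i) = length (map (cf F) [tmap F!i..<tmap F!Suc i])"
    using arrowD(5)[OF F i] by simp
  fix r assume r: "r < length (tcomp F ! i)"
  then have r': "tmap F ! i + r < tmap F ! Suc i" using arrowD(5)[OF F i] by simp
  have e: "ix (tmap F) (tmap F ! i + r) = i"
    by (rule ix_eq[OF arrow_mono[OF F] i]) (use r' in auto)
  have u: "map (cf F) [tmap F!i..<tmap F!Suc i] ! r = cf F (tmap F ! i + r)"
    using r' by (simp add: nth_upt del: upt_Suc)
  show "tcomp F ! i ! r = map (cf F) [tmap F!i..<tmap F!Suc i] ! r"
    using r r' unfolding cf_def u e by simp
qed

lemma arrow_mk:
  assumes F: "F \<in> theta_arrows C"
  shows "F = mk (tsrc F) (ttgt F) (tmap F) (cf F)"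
proof -
  have "tcomp F = map (\<lambda>i. map (cf F) [tmap F!i..<tmap F!Suc i]) [0..<length (tsrc F)]"
    by (rule nth_equalityI) (use arrowD(4)[OF F] arrow_tcomp[OF F] in auto)
  then show ?thesis unfolding mk_def by simp
qed

lemma arrow_cf:
  assumes F: "F \<in> theta_arrows C" and i: "i < length (tsrc F)"
    and k: "tmap F ! i \<le> k" "k < tmap F ! Suc i"
  shows "cf F k \<in> Ar C \<and> Dom C (cf F k) = tsrc F ! i \<and> Cod C (cf F k) = ttgt F ! k"
proof -
  have e: "ix (tmap F) k = i" by (rule ix_eq[OF arrow_mono[OF F] i k])
  have r: "k - tmap F ! i < length (tcomp F ! i)" using arrowD(5)[OF F i] k by simp
  show ?thesis using arrowD(6)[OF F i r] k unfolding cf_def e by simp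
qed

lemma mk_arrow:
  assumes "set cs \<subseteq> Ob C" "set ds \<subseteq> Ob C" "delta_mor (length cs) (length ds) \<alpha>"
    and g: "\<And>i k. i < length cs \<Longrightarrow> \<alpha>!i \<le> k \<Longrightarrow> k < \<alpha>!Suc i \<Longrightarrow>
       g k \<in> Ar C \<and> Dom C (g k) = cs!i \<and> Cod C (g k) = ds!k"
  shows "mk cs ds \<alpha> g \<in> theta_arrows C"
  unfolding theta_arrows_def mk_def using assms g by auto

lemma mk_cong:
  assumes "\<And>i k. i < length cs \<Longrightarrow> \<alpha>!i \<le> k \<Longrightarrow> k < \<alpha>!Suc i \<Longrightarrow> g k = g' k"
  shows "mk cs ds \<alpha> g = mk cs ds \<alpha> g'"
  unfolding mk_def using assms by (auto intro!: map_cong)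

lemma mk_sel[simp]: "tsrc (mk cs ds \<alpha> g) = cs" "ttgt (mk cs ds \<alpha> g) = ds" "tmap (mk cs ds \<alpha> g) = \<alpha>"
  unfolding mk_def by simp_all

lemma cf_mk:
  assumes mono: "\<forall>i<length cs. \<alpha>!i \<le> \<alpha>!Suc i" and "i < length cs" "\<alpha>!i \<le> k" "k < \<alpha>!Suc i"
  shows "cf (mk cs ds \<alpha> g) k = g k"
proof -
  have e: "ix \<alpha> k = i" by (rule ix_eq[OF mono assms(2-4)])
  show ?thesis unfolding cf_def mk_sel e unfolding mk_def using assms by simp
qed


lemma catD:
  assumes "is_category C"
  shows "\<And>f. f \<in> Ar C \<Longrightarrow> Dom C f \<in> Ob C \<and> Cod C f \<in> Ob C"
   "\<And>c. c \<in> Ob C \<Longrightarrow> Id C c \<in> Ar C \<and> Dom C (Id C c) = c \<and> Cod C (Id C c) = c"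
   "\<And>f g. f \<in> Ar C \<Longrightarrow> g \<in> Ar C \<Longrightarrow> Cod C f = Dom C g \<Longrightarrow>
        Cmp C g f \<in> Ar C \<and> Dom C (Cmp C g f) = Dom C f \<and> Cod C (Cmp C g f) = Cod C g"
   "\<And>f. f \<in> Ar C \<Longrightarrow> Cmp C (Id C (Cod C f)) f = f"
   "\<And>f. f \<in> Ar C \<Longrightarrow> Cmp C f (Id C (Dom C f)) = f"
   "\<And>f g h. f \<in> Ar C \<Longrightarrow> g \<in> Ar C \<Longrightarrow> h \<in> Ar C \<Longrightarrow> Cod C f = Dom C g \<Longrightarrow> Cod C g = Dom C h \<Longrightarrow>
        Cmp C h (Cmp C g f) = Cmp C (Cmp C h g) f"
  using assms unfolding is_category_def by blast+

lemma cmp_mk: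
  assumes F: "F \<in> theta_arrows C" and G: "G \<in> theta_arrows C" and FG: "ttgt F = tsrc G"
  shows "theta_cmp C G F = mk (tsrc F) (ttgt G) (map (\<lambda>a. tmap G ! a) (tmap F))
            (\<lambda>k. Cmp C (cf G k) (cf F (ix (tmap G) k)))"
proof -
  let ?m = "length (tsrc F)"
  let ?n = "length (tsrc G)"
  let ?\<alpha> = "tmap F" let ?\<beta> = "tmap G"
  have lenF: "length ?\<alpha> = Suc ?m" by (rule arrow_len[OF F])
  have tc: "map (\<lambda>i. concat (map (\<lambda>(f, j). map (\<lambda>g. Cmp C g f) (tcomp G ! j))
                     (zip (tcomp F ! i) [?\<alpha> ! i ..< ?\<alpha> ! Suc i]))) [0 ..< ?m]
     = map (\<lambda>i. map (\<lambda>k. Cmp C (cf G k) (cf F (ix ?\<beta> k)))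
          [map (\<lambda>a. ?\<beta> ! a) ?\<alpha> ! i..<map (\<lambda>a. ?\<beta> ! a) ?\<alpha> ! Suc i]) [0..<?m]"
  proof (rule map_cong[OF refl])
    fix i assume "i \<in> set [0..<?m]"
    then have i: "i < ?m" by simp
    have a1: "?\<alpha> ! i \<le> ?\<alpha> ! Suc i" using arrow_mono[OF F] i by simp
    have a2: "?\<alpha> ! Suc i \<le> ?n" using arrow_bound[OF F, of "Suc i"] i FG by simp
    have "zip (tcomp F ! i) [?\<alpha> ! i ..< ?\<alpha> ! Suc i] = map (\<lambda>j. (cf F j, j)) [?\<alpha> ! i ..< ?\<alpha> ! Suc i]"
      unfolding arrow_tcomp[OF F i] zip_map1 zip_same_conv_map by simp
    then have "concat (map (\<lambda>(f, j). map (\<lambda>g. Cmp C g f) (tcomp G ! j))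
                     (zip (tcomp F ! i) [?\<alpha> ! i ..< ?\<alpha> ! Suc i]))
       = concat (map (\<lambda>j. map (\<lambda>g. Cmp C g (cf F j)) (tcomp G ! j)) [?\<alpha> ! i ..< ?\<alpha> ! Suc i])"
      by (simp add: o_def)
    also have "\<dots> = concat (map (\<lambda>j. map (\<lambda>k. Cmp C (cf G k) (cf F j)) [?\<beta>!j..<?\<beta>!Suc j]) [?\<alpha> ! i ..< ?\<alpha> ! Suc i])"
    proof (rule arg_cong[where f=concat], rule map_cong[OF refl])
      fix j assume "j \<in> set [?\<alpha> ! i ..< ?\<alpha> ! Suc i]"
      then have "j < ?n" using a2 by simp
      then show "map (\<lambda>g. Cmp C g (cf F j)) (tcomp G ! j) = map (\<lambda>k. Cmp C (cf G k) (cf F j)) [?\<beta>!j..<?\<beta>!Suc j]"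
        using arrow_tcomp[OF G \<open>j < ?n\<close>] by simp
    qed
    also have "\<dots> = map (\<lambda>k. Cmp C (cf G k) (cf F (ix ?\<beta> k))) [?\<beta> ! (?\<alpha> ! i)..<?\<beta> ! (?\<alpha> ! Suc i)]"
      by (rule concat_blocks[OF arrow_mono[OF G] a1 a2])
    also have "\<dots> = map (\<lambda>k. Cmp C (cf G k) (cf F (ix ?\<beta> k)))
          [map (\<lambda>a. ?\<beta> ! a) ?\<alpha> ! i..<map (\<lambda>a. ?\<beta> ! a) ?\<alpha> ! Suc i]"
      using lenF i by simp
    finally show "concat (map (\<lambda>(f, j). map (\<lambda>g. Cmp C g f) (tcomp G ! j))
                     (zip (tcomp F ! i) [?\<alpha> ! i ..< ?\<alpha> ! Suc i])) = map (\<lambda>k. Cmp C (cf G k) (cf F (ix ?\<beta> k)))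
          [map (\<lambda>a. ?\<beta> ! a) ?\<alpha> ! i..<map (\<lambda>a. ?\<beta> ! a) ?\<alpha> ! Suc i]" .
  qed
  show ?thesis unfolding theta_cmp_def mk_def tc by simp
qed

lemma cmp_arrow:
  assumes C: "is_category C" and F: "F \<in> theta_arrows C" and G: "G \<in> theta_arrows C" and FG: "ttgt F = tsrc G"
  shows "theta_cmp C G F \<in> theta_arrows C"
proof -
  let ?m = "length (tsrc F)"
  let ?n = "length (tsrc G)"
  let ?\<alpha> = "tmap F" let ?\<beta> = "tmap G"
  have lenF: "length ?\<alpha> = Suc ?m" by (rule arrow_len[OF F])
  have lenG: "length ?\<beta> = Suc ?n" by (rule arrow_len[OF G])
  have dm: "delta_mor ?m (length (ttgt G)) (map (\<lambda>a. ?\<beta> ! a) ?\<alpha>)"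
    unfolding delta_mor_def
  proof (intro conjI allI impI)
    show "length (map (\<lambda>a. ?\<beta> ! a) ?\<alpha>) = Suc ?m" using lenF by simp
    fix i
    { assume i: "i < ?m"
      have "?\<alpha> ! i \<le> ?\<alpha> ! Suc i" using arrow_mono[OF F] i by simp
      moreover have "?\<alpha> ! Suc i \<le> ?n" using arrow_bound[OF F, of "Suc i"] i FG by simp
      ultimately have "?\<beta> ! (?\<alpha> ! i) \<le> ?\<beta> ! (?\<alpha> ! Suc i)"
        using mono_chain[OF arrow_mono[OF G]] by simp
      then show "map (\<lambda>a. ?\<beta> ! a) ?\<alpha> ! i \<le> map (\<lambda>a. ?\<beta> ! a) ?\<alpha> ! Suc i" using lenF i by simp }
    { assume i: "i \<le> ?m"
      have "?\<alpha> ! i \<le> ?n" using arrow_bound[OF F, of i] i FG by simp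
      then have "?\<beta> ! (?\<alpha> ! i) \<le> length (ttgt G)" using arrow_bound[OF G] by simp
      then show "map (\<lambda>a. ?\<beta> ! a) ?\<alpha> ! i \<le> length (ttgt G)" using lenF i by simp }
  qed
  show ?thesis unfolding cmp_mk[OF F G FG]
  proof (rule mk_arrow)
    show "set (tsrc F) \<subseteq> Ob C" "set (ttgt G) \<subseteq> Ob C" using arrowD[OF F] arrowD[OF G] by auto
    show "delta_mor ?m (length (ttgt G)) (map (\<lambda>a. ?\<beta> ! a) ?\<alpha>)" by (rule dm)
    fix i k assume i: "i < ?m" and k1: "map (\<lambda>a. ?\<beta> ! a) ?\<alpha> ! i \<le> k"
      and k2: "k < map (\<lambda>a. ?\<beta> ! a) ?\<alpha> ! Suc i"
    have a1: "?\<alpha> ! i \<le> ?\<alpha> ! Suc i" using arrow_mono[OF F] i by simp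
    have a2: "?\<alpha> ! Suc i \<le> ?n" using arrow_bound[OF F, of "Suc i"] i FG by simp
    have kk: "?\<beta> ! (?\<alpha> ! i) \<le> k" "k < ?\<beta> ! (?\<alpha> ! Suc i)" using k1 k2 lenF i by auto
    define j where "j = ix ?\<beta> k"
    have jr: "?\<alpha> ! i \<le> j \<and> j < ?\<alpha> ! Suc i"
      unfolding j_def by (rule ix_range[OF arrow_mono[OF G] a1 a2 kk])
    have jn: "j < ?n" using jr a2 by simp
    have jb: "?\<beta> ! j \<le> k \<and> k < ?\<beta> ! Suc j"
    proof -
      have "?\<beta> ! 0 \<le> ?\<beta> ! (?\<alpha> ! i)" using mono_chain[OF arrow_mono[OF G], of 0 "?\<alpha> ! i"] a1 a2 by simp
      moreover have "?\<beta> ! (?\<alpha> ! Suc i) \<le> ?\<beta> ! ?n" using mono_chain[OF arrow_mono[OF G], of "?\<alpha> ! Suc i" ?n] a2 by simp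
      ultimately show ?thesis using ix_props[OF arrow_mono[OF G], of k] kk unfolding j_def by simp
    qed
    have g: "cf G k \<in> Ar C \<and> Dom C (cf G k) = tsrc G ! j \<and> Cod C (cf G k) = ttgt G ! k"
      using arrow_cf[OF G jn] jb by simp
    have f: "cf F j \<in> Ar C \<and> Dom C (cf F j) = tsrc F ! i \<and> Cod C (cf F j) = ttgt F ! j"
      using arrow_cf[OF F i] jr by simp
    show "Cmp C (cf G k) (cf F (ix ?\<beta> k)) \<in> Ar C \<and> Dom C (Cmp C (cf G k) (cf F (ix ?\<beta> k))) = tsrc F ! i
          \<and> Cod C (Cmp C (cf G k) (cf F (ix ?\<beta> k))) = ttgt G ! k"
      using catD(3)[OF C, of "cf F j" "cf G k"] g f FG unfolding j_def[symmetric] by simp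
  qed
qed

lemma id_mk: "theta_id C cs = mk cs cs [0..<Suc (length cs)] (\<lambda>k. Id C (cs ! k))"
proof -
  have "map (\<lambda>c. [Id C c]) cs = map (\<lambda>i. map (\<lambda>k. Id C (cs ! k)) [[0..<Suc (length cs)] ! i..<[0..<Suc (length cs)] ! Suc i]) [0..<length cs]"
    by (rule nth_equalityI) (simp_all del: upt_Suc, simp)
  then show ?thesis unfolding theta_id_def mk_def by simp
qed

lemma id_arrow:
  assumes C: "is_category C" and cs: "set cs \<subseteq> Ob C"
  shows "theta_id C cs \<in> theta_arrows C"
  unfolding id_mk
proof (rule mk_arrow[OF cs cs])
  show "delta_mor (length cs) (length cs) [0..<Suc (length cs)]"
    unfolding delta_mor_def by (simp del: upt_Suc)
  fix i k assume "i < length cs" "[0..<Suc (length cs)] ! i \<le> k" "k < [0..<Suc (length cs)] ! Suc i"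
  then have "k = i" by (simp del: upt_Suc)
  then show "Id C (cs ! k) \<in> Ar C \<and> Dom C (Id C (cs ! k)) = cs ! i \<and> Cod C (Id C (cs ! k)) = cs ! k"
    using catD(2)[OF C] cs \<open>i < length cs\<close> by (simp add: subset_code(1))
qed


lemma upt_nth_le: "a \<le> n \<Longrightarrow> [0..<Suc n] ! a = a"
  by (simp del: upt_Suc)

lemma id_mono: "\<forall>i<length cs. [0..<Suc (length cs)] ! i \<le> [0..<Suc (length cs)] ! Suc i"
  by (simp del: upt_Suc)

lemma id_sel[simp]: "tsrc (theta_id C cs) = cs" "ttgt (theta_id C cs) = cs"
  "tmap (theta_id C cs) = [0..<Suc (length cs)]"
  unfolding theta_id_def by simp_all

lemma cf_id:
  assumes "k < length cs"
  shows "cf (theta_id C cs) k = Id C (cs ! k)"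
  unfolding id_mk by (rule cf_mk[OF id_mono assms]) (use assms in \<open>simp_all del: upt_Suc\<close>)

lemma ix_id: "k < n \<Longrightarrow> ix [0..<Suc n] k = k"
  by (rule ix_eq[where m=n]) (simp_all del: upt_Suc)

lemma cmp_idl:
  assumes C: "is_category C" and F: "F \<in> theta_arrows C"
  shows "theta_cmp C (theta_id C (ttgt F)) F = F"
proof -
  let ?n = "length (ttgt F)"
  have I: "theta_id C (ttgt F) \<in> theta_arrows C" by (rule id_arrow[OF C arrowD(2)[OF F]])
  have tm: "map (\<lambda>a. tmap (theta_id C (ttgt F)) ! a) (tmap F) = tmap F"
  proof (rule map_idI)
    fix a assume "a \<in> set (tmap F)"
    then obtain i where "i < length (tmap F)" "a = tmap F ! i" by (auto simp: in_set_conv_nth)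
    then have "a \<le> ?n" using arrow_bound[OF F, of i] arrow_len[OF F] by simp
    then show "tmap (theta_id C (ttgt F)) ! a = a" unfolding theta_id_def by (simp add: upt_nth_le del: upt_Suc)
  qed
  have "theta_cmp C (theta_id C (ttgt F)) F = mk (tsrc F) (ttgt F) (tmap F)
      (\<lambda>k. Cmp C (cf (theta_id C (ttgt F)) k) (cf F (ix (tmap (theta_id C (ttgt F))) k)))"
    using cmp_mk[OF F I] tm by simp
  also have "\<dots> = mk (tsrc F) (ttgt F) (tmap F) (cf F)"
  proof (rule mk_cong)
    fix i k assume i: "i < length (tsrc F)" and k: "tmap F ! i \<le> k" "k < tmap F ! Suc i"
    have kn: "k < ?n" using k arrow_bound[OF F, of "Suc i"] i by simp
    have f: "cf F k \<in> Ar C \<and> Dom C (cf F k) = tsrc F ! i \<and> Cod C (cf F k) = ttgt F ! k"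
      by (rule arrow_cf[OF F i k])
    show "Cmp C (cf (theta_id C (ttgt F)) k) (cf F (ix (tmap (theta_id C (ttgt F))) k)) = cf F k"
      using cf_id[OF kn, of C] ix_id[OF kn] catD(4)[OF C, of "cf F k"] f
      by (simp del: upt_Suc)
  qed
  also have "\<dots> = F" using arrow_mk[OF F] by simp
  finally show ?thesis .
qed

lemma cmp_idr:
  assumes C: "is_category C" and F: "F \<in> theta_arrows C"
  shows "theta_cmp C F (theta_id C (tsrc F)) = F"
proof -
  let ?m = "length (tsrc F)"
  have I: "theta_id C (tsrc F) \<in> theta_arrows C" by (rule id_arrow[OF C arrowD(1)[OF F]])
  have tm: "map (\<lambda>a. tmap F ! a) (tmap (theta_id C (tsrc F))) = tmap F"
    by (rule nth_equalityI) (simp_all add: theta_id_def arrow_len[OF F] del: upt_Suc)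
  have "theta_cmp C F (theta_id C (tsrc F)) = mk (tsrc F) (ttgt F) (tmap F)
      (\<lambda>k. Cmp C (cf F k) (cf (theta_id C (tsrc F)) (ix (tmap F) k)))"
    using cmp_mk[OF I F] tm by simp
  also have "\<dots> = mk (tsrc F) (ttgt F) (tmap F) (cf F)"
  proof (rule mk_cong)
    fix i k assume i: "i < length (tsrc F)" and k: "tmap F ! i \<le> k" "k < tmap F ! Suc i"
    have e: "ix (tmap F) k = i" by (rule ix_eq[OF arrow_mono[OF F] i k])
    have f: "cf F k \<in> Ar C \<and> Dom C (cf F k) = tsrc F ! i \<and> Cod C (cf F k) = ttgt F ! k"
      by (rule arrow_cf[OF F i k])
    show "Cmp C (cf F k) (cf (theta_id C (tsrc F)) (ix (tmap F) k)) = cf F k"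
      unfolding e cf_id[OF i] using catD(5)[OF C, of "cf F k"] f by simp
  qed
  also have "\<dots> = F" using arrow_mk[OF F] by simp
  finally show ?thesis .
qed

lemma cmp_assoc:
  assumes C: "is_category C" and F: "F \<in> theta_arrows C" and G: "G \<in> theta_arrows C"
    and H: "H \<in> theta_arrows C" and FG: "ttgt F = tsrc G" and GH: "ttgt G = tsrc H"
  shows "theta_cmp C H (theta_cmp C G F) = theta_cmp C (theta_cmp C H G) F"
proof -
  let ?m = "length (tsrc F)" let ?n = "length (tsrc G)" let ?p = "length (tsrc H)"
  let ?\<alpha> = "tmap F" let ?\<beta> = "tmap G" let ?\<gamma> = "tmap H"
  have GF: "theta_cmp C G F \<in> theta_arrows C" by (rule cmp_arrow[OF C F G FG])
  have HG: "theta_cmp C H G \<in> theta_arrows C" by (rule cmp_arrow[OF C G H GH])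
  have monoF: "\<forall>i<?m. ?\<alpha> ! i \<le> ?\<alpha> ! Suc i" by (rule arrow_mono[OF F])
  have monoG: "\<forall>i<?n. ?\<beta> ! i \<le> ?\<beta> ! Suc i" by (rule arrow_mono[OF G])
  have monoH: "\<forall>i<?p. ?\<gamma> ! i \<le> ?\<gamma> ! Suc i" by (rule arrow_mono[OF H])
  have lenF: "length ?\<alpha> = Suc ?m" by (rule arrow_len[OF F])
  have lenG: "length ?\<beta> = Suc ?n" by (rule arrow_len[OF G])
  have bF: "\<And>i. i \<le> ?m \<Longrightarrow> ?\<alpha> ! i \<le> ?n" using arrow_bound[OF F] FG by simp
  have bG: "\<And>i. i \<le> ?n \<Longrightarrow> ?\<beta> ! i \<le> ?p" using arrow_bound[OF G] GH by simp
  have GFe: "theta_cmp C G F = mk (tsrc F) (ttgt G) (map (\<lambda>a. ?\<beta> ! a) ?\<alpha>)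
            (\<lambda>k. Cmp C (cf G k) (cf F (ix ?\<beta> k)))" by (rule cmp_mk[OF F G FG])
  have HGe: "theta_cmp C H G = mk (tsrc G) (ttgt H) (map (\<lambda>a. ?\<gamma> ! a) ?\<beta>)
            (\<lambda>k. Cmp C (cf H k) (cf G (ix ?\<gamma> k)))" by (rule cmp_mk[OF G H GH])
  have L: "theta_cmp C H (theta_cmp C G F) = mk (tsrc F) (ttgt H) (map (\<lambda>a. ?\<gamma> ! a) (map (\<lambda>a. ?\<beta> ! a) ?\<alpha>))
     (\<lambda>k. Cmp C (cf H k) (cf (theta_cmp C G F) (ix ?\<gamma> k)))"
    using cmp_mk[OF GF H] GFe GH by simp
  have R: "theta_cmp C (theta_cmp C H G) F = mk (tsrc F) (ttgt H) (map (\<lambda>a. map (\<lambda>a. ?\<gamma> ! a) ?\<beta> ! a) ?\<alpha>)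
     (\<lambda>k. Cmp C (cf (theta_cmp C H G) k) (cf F (ix (map (\<lambda>a. ?\<gamma> ! a) ?\<beta>) k)))"
    using cmp_mk[OF F HG] HGe FG by simp
  have tm: "map (\<lambda>a. map (\<lambda>a. ?\<gamma> ! a) ?\<beta> ! a) ?\<alpha> = map (\<lambda>a. ?\<gamma> ! a) (map (\<lambda>a. ?\<beta> ! a) ?\<alpha>)"
  proof -
    have "\<And>a. a \<in> set ?\<alpha> \<Longrightarrow> map (\<lambda>a. ?\<gamma> ! a) ?\<beta> ! a = ?\<gamma> ! (?\<beta> ! a)"
    proof -
      fix a assume "a \<in> set ?\<alpha>"
      then obtain i where "i < length ?\<alpha>" "a = ?\<alpha> ! i" by (auto simp: in_set_conv_nth)
      then have "a \<le> ?n" using bF lenF by simp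
      then show "map (\<lambda>a. ?\<gamma> ! a) ?\<beta> ! a = ?\<gamma> ! (?\<beta> ! a)" using lenG by simp
    qed
    then show ?thesis by simp
  qed
  have "mk (tsrc F) (ttgt H) (map (\<lambda>a. ?\<gamma> ! a) (map (\<lambda>a. ?\<beta> ! a) ?\<alpha>))
     (\<lambda>k. Cmp C (cf H k) (cf (theta_cmp C G F) (ix ?\<gamma> k))) =
     mk (tsrc F) (ttgt H) (map (\<lambda>a. ?\<gamma> ! a) (map (\<lambda>a. ?\<beta> ! a) ?\<alpha>))
     (\<lambda>k. Cmp C (cf (theta_cmp C H G) k) (cf F (ix (map (\<lambda>a. ?\<gamma> ! a) ?\<beta>) k)))"
  proof (rule mk_cong)
    fix i k assume i: "i < ?m"
      and k1: "map (\<lambda>a. ?\<gamma> ! a) (map (\<lambda>a. ?\<beta> ! a) ?\<alpha>) ! i \<le> k"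
      and k2: "k < map (\<lambda>a. ?\<gamma> ! a) (map (\<lambda>a. ?\<beta> ! a) ?\<alpha>) ! Suc i"
    have kk: "?\<gamma> ! (?\<beta> ! (?\<alpha> ! i)) \<le> k" "k < ?\<gamma> ! (?\<beta> ! (?\<alpha> ! Suc i))"
      using k1 k2 lenF i by auto
    have a1: "?\<alpha> ! i \<le> ?\<alpha> ! Suc i" using monoF i by simp
    have a2: "?\<alpha> ! Suc i \<le> ?n" using bF i by simp
    have b1: "?\<beta> ! (?\<alpha> ! i) \<le> ?\<beta> ! (?\<alpha> ! Suc i)" using mono_chain[OF monoG a1 a2] .
    have b2: "?\<beta> ! (?\<alpha> ! Suc i) \<le> ?p" using bG a2 by simp
    define j where "j = ix ?\<gamma> k"
    have jr: "?\<beta> ! (?\<alpha> ! i) \<le> j \<and> j < ?\<beta> ! (?\<alpha> ! Suc i)"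
      unfolding j_def by (rule ix_range[OF monoH b1 b2 kk])
    have jp: "j < ?p" using jr b2 by simp
    have jb: "?\<gamma> ! j \<le> k \<and> k < ?\<gamma> ! Suc j"
    proof -
      have "?\<gamma> ! 0 \<le> ?\<gamma> ! (?\<beta> ! (?\<alpha> ! i))" using mono_chain[OF monoH, of 0] b1 b2 by simp
      moreover have "?\<gamma> ! (?\<beta> ! (?\<alpha> ! Suc i)) \<le> ?\<gamma> ! ?p" using mono_chain[OF monoH, of _ ?p] b2 by simp
      ultimately show ?thesis using ix_props[OF monoH, of k] kk unfolding j_def by simp
    qed
    define i' where "i' = ix ?\<beta> j"
    have i'r: "?\<alpha> ! i \<le> i' \<and> i' < ?\<alpha> ! Suc i"
      unfolding i'_def by (rule ix_range[OF monoG a1 a2]) (use jr in auto)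
    have i'n: "i' < ?n" using i'r a2 by simp
    have i'b: "?\<beta> ! i' \<le> j \<and> j < ?\<beta> ! Suc i'"
    proof -
      have "?\<beta> ! 0 \<le> ?\<beta> ! (?\<alpha> ! i)" using mono_chain[OF monoG, of 0] a1 a2 by simp
      moreover have "?\<beta> ! (?\<alpha> ! Suc i) \<le> ?\<beta> ! ?n" using mono_chain[OF monoG, of _ ?n] a2 by simp
      ultimately show ?thesis using ix_props[OF monoG, of j] jr unfolding i'_def by simp
    qed
    have cGF: "cf (theta_cmp C G F) j = Cmp C (cf G j) (cf F i')"
      unfolding GFe i'_def
      by (rule cf_mk) (use monoG monoF lenF i jr bF mono_chain[OF monoG] in \<open>auto\<close>)
    have monoGH: "\<forall>t<?n. map (\<lambda>a. ?\<gamma> ! a) ?\<beta> ! t \<le> map (\<lambda>a. ?\<gamma> ! a) ?\<beta> ! Suc t"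
      using monoG lenG bG mono_chain[OF monoH] by auto
    have blk1: "map (\<lambda>a. ?\<gamma> ! a) ?\<beta> ! i' \<le> k"
    proof -
      have "?\<gamma> ! (?\<beta> ! i') \<le> ?\<gamma> ! j" using mono_chain[OF monoH] i'b jp by simp
      then show ?thesis using jb lenG i'n by simp
    qed
    have blk2: "k < map (\<lambda>a. ?\<gamma> ! a) ?\<beta> ! Suc i'"
    proof -
      have "?\<gamma> ! Suc j \<le> ?\<gamma> ! (?\<beta> ! Suc i')" using mono_chain[OF monoH] i'b bG i'n by simp
      then show ?thesis using jb lenG i'n by simp
    qed
    have ixc: "ix (map (\<lambda>a. ?\<gamma> ! a) ?\<beta>) k = i'"
      by (rule ix_eq[OF monoGH i'n blk1 blk2])
    have cHG: "cf (theta_cmp C H G) k = Cmp C (cf H k) (cf G j)"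
      unfolding HGe j_def
      by (rule cf_mk[OF monoGH i'n blk1 blk2])
    have f: "cf F i' \<in> Ar C \<and> Dom C (cf F i') = tsrc F ! i \<and> Cod C (cf F i') = ttgt F ! i'"
      using arrow_cf[OF F i] i'r by simp
    have g: "cf G j \<in> Ar C \<and> Dom C (cf G j) = tsrc G ! i' \<and> Cod C (cf G j) = ttgt G ! j"
      using arrow_cf[OF G i'n] i'b by simp
    have h: "cf H k \<in> Ar C \<and> Dom C (cf H k) = tsrc H ! j \<and> Cod C (cf H k) = ttgt H ! k"
      using arrow_cf[OF H jp] jb by simp
    show "Cmp C (cf H k) (cf (theta_cmp C G F) (ix ?\<gamma> k)) =
          Cmp C (cf (theta_cmp C H G) k) (cf F (ix (map (\<lambda>a. ?\<gamma> ! a) ?\<beta>) k))"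
      unfolding j_def[symmetric] cGF cHG ixc
      using catD(6)[OF C, of "cf F i'" "cf G j" "cf H k"] f g h FG GH by simp
  qed
  then show ?thesis unfolding L R tm .
qed

lemma theta_category:
  assumes C: "is_category C"
  shows "is_category (Theta C)"
proof -
  have 1: "\<forall>f\<in>Ar (Theta C). Dom (Theta C) f \<in> Ob (Theta C) \<and> Cod (Theta C) f \<in> Ob (Theta C)"
    using arrowD(1,2) by (fastforce simp: Theta_def)
  have 2: "\<forall>c\<in>Ob (Theta C). Id (Theta C) c \<in> Ar (Theta C) \<and> Dom (Theta C) (Id (Theta C) c) = c \<and> Cod (Theta C) (Id (Theta C) c) = c"
    using id_arrow[OF C] by (simp add: Theta_def)
  have 3: "\<forall>f\<in>Ar (Theta C). \<forall>g\<in>Ar (Theta C). Cod (Theta C) f = Dom (Theta C) g \<longrightarrow>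
        Cmp (Theta C) g f \<in> Ar (Theta C) \<and> Dom (Theta C) (Cmp (Theta C) g f) = Dom (Theta C) f \<and> Cod (Theta C) (Cmp (Theta C) g f) = Cod (Theta C) g"
    using cmp_arrow[OF C] by (simp add: Theta_def theta_cmp_def)
  have 4: "\<forall>f\<in>Ar (Theta C). Cmp (Theta C) (Id (Theta C) (Cod (Theta C) f)) f = f \<and> Cmp (Theta C) f (Id (Theta C) (Dom (Theta C) f)) = f"
    using cmp_idl[OF C] cmp_idr[OF C] by (simp add: Theta_def)
  have 5: "\<forall>f\<in>Ar (Theta C). \<forall>g\<in>Ar (Theta C). \<forall>h\<in>Ar (Theta C). Cod (Theta C) f = Dom (Theta C) g \<longrightarrow> Cod (Theta C) g = Dom (Theta C) h \<longrightarrow>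
        Cmp (Theta C) h (Cmp (Theta C) g f) = Cmp (Theta C) (Cmp (Theta C) h g) f"
    using cmp_assoc[OF C] by (simp add: Theta_def)
  show ?thesis unfolding is_category_def using 1 2 3 4 5 by blast
qed


lemma mono_family_points:
  "mono_family m \<alpha>s \<longleftrightarrow> (\<forall>k\<le>m. \<forall>k'\<le>m. (\<forall>\<alpha>\<in>set \<alpha>s. \<alpha> ! k = \<alpha> ! k') \<longrightarrow> k = k')"
proof
  assume mf: "mono_family m \<alpha>s"
  show "\<forall>k\<le>m. \<forall>k'\<le>m. (\<forall>\<alpha>\<in>set \<alpha>s. \<alpha> ! k = \<alpha> ! k') \<longrightarrow> k = k'"
  proof (intro allI impI)
    fix k k' assume k: "k \<le> m" "k' \<le> m" and e: "\<forall>\<alpha>\<in>set \<alpha>s. \<alpha> ! k = \<alpha> ! k'"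
    have "delta_mor 0 m [k]" "delta_mor 0 m [k']" using k unfolding delta_mor_def by auto
    moreover have "\<forall>\<alpha>\<in>set \<alpha>s. map (\<lambda>b. \<alpha> ! b) [k] = map (\<lambda>b. \<alpha> ! b) [k']" using e by simp
    ultimately have "[k] = [k']" using mf unfolding mono_family_def by blast
    then show "k = k'" by simp
  qed
next
  assume pt: "\<forall>k\<le>m. \<forall>k'\<le>m. (\<forall>\<alpha>\<in>set \<alpha>s. \<alpha> ! k = \<alpha> ! k') \<longrightarrow> k = k'"
  show "mono_family m \<alpha>s" unfolding mono_family_def
  proof (intro allI impI)
    fix k0 \<beta> \<beta>' assume b: "delta_mor k0 m \<beta>" and b': "delta_mor k0 m \<beta>'"
      and e: "\<forall>\<alpha>\<in>set \<alpha>s. map (\<lambda>b. \<alpha> ! b) \<beta> = map (\<lambda>b. \<alpha> ! b) \<beta>'"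
    show "\<beta> = \<beta>'"
    proof (rule nth_equalityI)
      show "length \<beta> = length \<beta>'" using b b' unfolding delta_mor_def by simp
      fix t assume t: "t < length \<beta>"
      have t': "t \<le> k0" "t < length \<beta>'" using t b b' unfolding delta_mor_def by auto
      have "\<beta> ! t \<le> m" "\<beta>' ! t \<le> m" using b b' t' unfolding delta_mor_def by auto
      moreover have "\<forall>\<alpha>\<in>set \<alpha>s. \<alpha> ! (\<beta> ! t) = \<alpha> ! (\<beta>' ! t)"
      proof
        fix \<alpha> assume "\<alpha> \<in> set \<alpha>s"
        then have "map (\<lambda>b. \<alpha> ! b) \<beta> ! t = map (\<lambda>b. \<alpha> ! b) \<beta>' ! t" using e by simp
        then show "\<alpha> ! (\<beta> ! t) = \<alpha> ! (\<beta>' ! t)" using t t' by simp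
      qed
      ultimately show "\<beta> ! t = \<beta>' ! t" using pt by blast
    qed
  qed
qed

fun blocks :: "nat list \<Rightarrow> 'a list \<Rightarrow> 'a list list" where
  "blocks [] ys = []"
| "blocks (l # ls) ys = take l ys # blocks ls (drop l ys)"

lemma length_blocks[simp]: "length (blocks ls ys) = length ls"
  by (induction ls arbitrary: ys) auto

lemma blocks_map: "map f ys = concat xss \<Longrightarrow> map (map f) (blocks (map length xss) ys) = xss"
proof (induction xss arbitrary: ys)
  case Nil then show ?case by simp
next
  case (Cons xs xss)
  have "take (length xs) (map f ys) = xs" "drop (length xs) (map f ys) = concat xss"
    using Cons.prems by simp_all
  then show ?case using Cons.IH[of "drop (length xs) ys"] by (simp add: take_map drop_map)
qed

lemma blocks_concat_eq: "concat zss = ys \<Longrightarrow> blocks (map length zss) ys = zss"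
  by (induction zss arbitrary: ys) auto

lemma concat_blocks_map: "map f ys = concat xss \<Longrightarrow> concat (blocks (map length xss) ys) = ys"
proof (induction xss arbitrary: ys)
  case Nil then show ?case by simp
next
  case (Cons xs xss)
  have "drop (length xs) (map f ys) = concat xss" using Cons.prems by simp
  then have "concat (blocks (map length xss) (drop (length xs) ys)) = drop (length xs) ys"
    using Cons.IH[of "drop (length xs) ys"] by (simp add: drop_map)
  then show ?case by simp
qed

lemma blocks_set: "s < length ls \<Longrightarrow> set (blocks ls ys ! s) \<subseteq> set ys"
proof (induction ls arbitrary: ys s)
  case Nil then show ?case by simp
next
  case (Cons l ls)
  show ?case
  proof (cases s)
    case 0 then show ?thesis by (simp add: set_take_subset)
  next
    case (Suc s') then show ?thesis using Cons.IH[of s' "drop l ys"] Cons.prems set_drop_subset[of l ys] by auto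
  qed
qed

lemma blocks_nth_map:
  assumes "map f ys = concat xss" "s < length xss"
  shows "map f (blocks (map length xss) ys ! s) = xss ! s"
proof -
  have "map (map f) (blocks (map length xss) ys) ! s = xss ! s" using blocks_map[OF assms(1)] by simp
  then show ?thesis using assms(2) by simp
qed

locale facto =
  fixes C :: "('o, 'm) cat" and M :: "'m set" and P :: "('o \<times> 'm list) set" and deg :: "'o \<Rightarrow> nat"
    and cs :: "'o list" and Fs :: "('o, 'm) tmor list"
  assumes MR: "multi_reedy C M P deg"
    and CF: "(cs, Fs) \<in> mmor (Theta C)"
begin

abbreviation "m \<equiv> length cs"
abbreviation "u \<equiv> length Fs"
abbreviation al :: "nat \<Rightarrow> nat list" where "al s \<equiv> tmap (Fs ! s)"

definition J :: "nat \<Rightarrow> bool" where "J i \<longleftrightarrow> (\<exists>s<u. al s ! i < al s ! Suc i)"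
definition sg :: "nat \<Rightarrow> nat" where "sg i = length (filter J [0..<i])"
definition jumps :: "nat list" where "jumps = filter J [0..<m]"
definition reps :: "nat list" where "reps = 0 # map Suc jumps"

lemma cat: "is_category C" using MR unfolding multi_reedy_def by (elim conjE) assumption
lemma wsM: "wide_subcat C M" using MR unfolding multi_reedy_def by (elim conjE) assumption
lemma wsP: "wide_submulticat C P" using MR unfolding multi_reedy_def by (elim conjE) assumption
lemma Msub: "M \<subseteq> Ar C" using wsM unfolding wide_subcat_def by (elim conjE) assumption
lemma Psub: "P \<subseteq> mmor C" using wsP unfolding wide_submulticat_def by (elim conjE) assumption

lemma cs_ob: "set cs \<subseteq> Ob C" using CF unfolding mmor_def Theta_def by simp
lemma F_arr: "s < u \<Longrightarrow> Fs ! s \<in> theta_arrows C" using CF unfolding mmor_def Theta_def by auto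
lemma F_src: "s < u \<Longrightarrow> tsrc (Fs ! s) = cs" using CF unfolding mmor_def Theta_def by auto
lemma F_arr': "F \<in> set Fs \<Longrightarrow> F \<in> theta_arrows C \<and> tsrc F = cs" using CF unfolding mmor_def Theta_def by auto

lemma al_mono: "s < u \<Longrightarrow> i < m \<Longrightarrow> al s ! i \<le> al s ! Suc i"
  using arrow_mono[OF F_arr] F_src by simp
lemma al_chain: "s < u \<Longrightarrow> a \<le> b \<Longrightarrow> b \<le> m \<Longrightarrow> al s ! a \<le> al s ! b"
  using mono_chain[OF arrow_mono[OF F_arr]] F_src by simp
lemma al_len: "s < u \<Longrightarrow> length (al s) = Suc m"
  using arrow_len[OF F_arr] F_src by simp
lemma al_bound: "s < u \<Longrightarrow> i \<le> m \<Longrightarrow> al s ! i \<le> length (ttgt (Fs ! s))"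
  using arrow_bound[OF F_arr] F_src by simp

lemma sg_0[simp]: "sg 0 = 0" unfolding sg_def by simp
lemma sg_Suc: "sg (Suc i) = sg i + (if J i then 1 else 0)"
  unfolding sg_def by simp
lemma sg_mono: "a \<le> b \<Longrightarrow> sg a \<le> sg b"
proof (induction b)
  case 0 then show ?case by simp
next
  case (Suc b) then show ?case using sg_Suc[of b] by (cases "a = Suc b") auto
qed
lemma sg_lessD: "sg a < sg b \<Longrightarrow> a < b"
  using sg_mono[of b a] by (cases "b \<le> a") auto
lemma len_jumps: "length jumps = sg m" unfolding jumps_def sg_def by simp

lemma jumps_sg: assumes "J i" "i < m" shows "jumps ! sg i = i"
proof -
  have "[0..<m] = [0..<i] @ [i] @ [Suc i..<m]" using assms(2) upt_split3[of 0 i m]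
    by (simp add: upt_conv_Cons)
  then have "jumps = filter J [0..<i] @ [i] @ filter J [Suc i..<m]" unfolding jumps_def using assms(1) by simp
  then show ?thesis unfolding sg_def by (simp add: nth_append)
qed

lemma jumps_props:
  assumes k: "k < sg m"
  shows "jumps ! k < m \<and> J (jumps ! k) \<and> sg (jumps ! k) = k"
proof -
  have mem: "jumps ! k \<in> set jumps" using k len_jumps by simp
  then have a: "jumps ! k < m" "J (jumps ! k)" unfolding jumps_def by auto
  have "sg (Suc (jumps ! k)) \<le> sg m" using a sg_mono[of "Suc (jumps ! k)" m] by simp
  then have b: "sg (jumps ! k) < length jumps" using a sg_Suc[of "jumps ! k"] len_jumps by simp
  have "jumps ! sg (jumps ! k) = jumps ! k" using jumps_sg a by simp
  moreover have "distinct jumps" unfolding jumps_def by simp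
  ultimately have "sg (jumps ! k) = k" using nth_eq_iff_index_eq[of jumps "sg (jumps ! k)" k] b k len_jumps by simp
  then show ?thesis using a by simp
qed

lemma notJ_eq: "\<not> J i \<Longrightarrow> s < u \<Longrightarrow> i < m \<Longrightarrow> al s ! i = al s ! Suc i"
  using al_mono[of s i] unfolding J_def by force

lemma const:
  assumes "r \<le> r'" "r' \<le> m" "sg r = sg r'" "s < u"
  shows "al s ! r = al s ! r'"
  using assms(1,2,3)
proof (induction r' rule: dec_induct)
  case base then show ?case by simp
next
  case (step t)
  have a: "sg r \<le> sg t" using sg_mono[of r t] step by simp
  have b: "sg t \<le> sg (Suc t)" using sg_mono[of t "Suc t"] by simp
  have "sg t = sg (Suc t)" using a b step.prems(2) by simp
  then have "\<not> J t" using sg_Suc[of t] by (auto split: if_splits)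
  then have "al s ! t = al s ! Suc t" using notJ_eq assms(4) step by simp
  moreover have "sg r = sg t" using a b step.prems(2) by simp
  ultimately show ?case using step.IH step.prems(1) by simp
qed

lemma reps_len: "length reps = Suc (sg m)" unfolding reps_def using len_jumps by simp

lemma reps_props:
  assumes "k \<le> sg m"
  shows "reps ! k \<le> m \<and> sg (reps ! k) = k"
proof (cases k)
  case 0 then show ?thesis unfolding reps_def by simp
next
  case (Suc k')
  then have k': "k' < sg m" using assms by simp
  have "reps ! k = Suc (jumps ! k')" unfolding reps_def using Suc k' len_jumps by simp
  then show ?thesis using jumps_props[OF k'] sg_Suc[of "jumps ! k'"] Suc by simp
qed

lemma reps_Suc: "k < sg m \<Longrightarrow> reps ! Suc k = Suc (jumps ! k)"
  unfolding reps_def using len_jumps by simp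

lemma reps_le_jumps: assumes "k < sg m" shows "reps ! k \<le> jumps ! k"
proof (rule ccontr)
  assume "\<not> reps ! k \<le> jumps ! k"
  then have "Suc (jumps ! k) \<le> reps ! k" by simp
  then have "sg (Suc (jumps ! k)) \<le> sg (reps ! k)" by (rule sg_mono)
  then show False using jumps_props[OF assms] reps_props[of k] assms sg_Suc[of "jumps ! k"] by simp
qed

lemma al_reps_jumps: assumes "k < sg m" "s < u" shows "al s ! (reps ! k) = al s ! (jumps ! k)"
proof -
  have "jumps ! k < m \<and> J (jumps ! k) \<and> sg (jumps ! k) = k" by (rule jumps_props[OF assms(1)])
  moreover have "reps ! k \<le> m \<and> sg (reps ! k) = k" using reps_props assms(1) by simp
  ultimately show ?thesis using const[of "reps ! k" "jumps ! k" s] reps_le_jumps[OF assms(1)] assms(2) by simp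
qed

lemma al_reps_sg: assumes "i \<le> m" "s < u" shows "al s ! (reps ! sg i) = al s ! i"
proof -
  have si: "sg i \<le> sg m" using sg_mono assms by simp
  have r: "reps ! sg i \<le> m \<and> sg (reps ! sg i) = sg i" by (rule reps_props[OF si])
  have "reps ! sg i \<le> i"
  proof (rule ccontr)
    assume "\<not> reps ! sg i \<le> i"
    then have "Suc i \<le> reps ! sg i" by simp
    show False
    proof (cases "sg i")
      case 0 then show False using \<open>\<not> reps ! sg i \<le> i\<close> unfolding reps_def by simp
    next
      case (Suc k')
      then have k': "k' < sg m" using si by simp
      have "reps ! sg i = Suc (jumps ! k')" using reps_Suc[OF k'] Suc by simp
      then have "i \<le> jumps ! k'" using \<open>Suc i \<le> reps ! sg i\<close> by simp
      then have "sg i \<le> sg (jumps ! k')" using sg_mono by simp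
      then show False using jumps_props[OF k'] Suc by simp
    qed
  qed
  then show ?thesis using const[of "reps ! sg i" i s] r assms by simp
qed

end


lemma mmor_iff: "(c, fs) \<in> mmor C \<longleftrightarrow> c \<in> Ob C \<and> (\<forall>f\<in>set fs. f \<in> Ar C \<and> Dom C f = c)"
  unfolding mmor_def by simp

context facto begin

definition mm :: "nat \<Rightarrow> 'm list" where "mm i = concat (map (\<lambda>F. tcomp F ! i) Fs)"

definition facP :: "nat \<Rightarrow> 'm \<Rightarrow> 'm list \<Rightarrow> bool" where
  "facP i a ps \<longleftrightarrow> a \<in> M \<and> Dom C a = cs ! i \<and> (Cod C a, ps) \<in> P \<and>
      map (Cod C) ps = map (Cod C) (mm i) \<and> mm i = map (\<lambda>p. Cmp C p a) ps"

definition fac :: "nat \<Rightarrow> 'm \<times> 'm list" where "fac i = (THE x. facP i (fst x) (snd x))"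

lemma mm_mmor: assumes i: "i < m" shows "(cs ! i, mm i) \<in> mmor C"
  unfolding mmor_iff
proof (intro conjI ballI)
  show "cs ! i \<in> Ob C" using cs_ob i by auto
  fix f assume "f \<in> set (mm i)"
  then obtain F where F: "F \<in> set Fs" "f \<in> set (tcomp F ! i)" unfolding mm_def by auto
  then obtain k where k: "k < length (tcomp F ! i)" "f = tcomp F ! i ! k" by (auto simp: in_set_conv_nth)
  have "F \<in> theta_arrows C" "tsrc F = cs" using F_arr' F(1) by auto
  then show "f \<in> Ar C" "Dom C f = cs ! i" using arrowD(6)[of F C i k] k i by simp_all
qed

lemma fac_ex1: assumes i: "i < m" shows "\<exists>!x. facP i (fst x) (snd x)"
proof -
  have "\<forall>(c, fs)\<in>mmor C. \<exists>!(a, ps). a \<in> M \<and> Dom C a = c \<and> (Cod C a, ps) \<in> P \<and>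
         map (Cod C) ps = map (Cod C) fs \<and> fs = map (\<lambda>p. Cmp C p a) ps"
    using MR unfolding multi_reedy_def by (elim conjE) assumption
  from bspec[OF this mm_mmor[OF i]]
  have "\<exists>!(a, ps). a \<in> M \<and> Dom C a = cs ! i \<and> (Cod C a, ps) \<in> P \<and>
         map (Cod C) ps = map (Cod C) (mm i) \<and> mm i = map (\<lambda>p. Cmp C p a) ps"
    by (simp only: prod.case)
  then show ?thesis unfolding facP_def case_prod_beta by assumption
qed

lemma fac_P: "i < m \<Longrightarrow> facP i (fst (fac i)) (snd (fac i))"
  unfolding fac_def using theI'[OF fac_ex1] by simp

lemma fac_uniq: "i < m \<Longrightarrow> facP i a ps \<Longrightarrow> fac i = (a, ps)"
  unfolding fac_def by (rule the1_equality[OF fac_ex1]) simp_all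

lemma fac_arr:
  assumes i: "i < m"
  shows "fst (fac i) \<in> Ar C" "fst (fac i) \<in> M" "Dom C (fst (fac i)) = cs ! i"
    "(Cod C (fst (fac i)), snd (fac i)) \<in> P" "mm i = map (\<lambda>p. Cmp C p (fst (fac i))) (snd (fac i))"
  using fac_P[OF i] Msub unfolding facP_def by auto

lemma fac_ps:
  assumes i: "i < m" and p: "p \<in> set (snd (fac i))"
  shows "p \<in> Ar C \<and> Dom C p = Cod C (fst (fac i))"
  using fac_arr(4)[OF i] Psub p unfolding mmor_def by auto

definition ys :: "'o list" where "ys = map (\<lambda>i. Cod C (fst (fac i))) jumps"

lemma ys_len: "length ys = sg m" unfolding ys_def using len_jumps by simp
lemma ys_nth: "k < sg m \<Longrightarrow> ys ! k = Cod C (fst (fac (jumps ! k)))"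
  unfolding ys_def using len_jumps by simp
lemma ys_ob: "set ys \<subseteq> Ob C"
proof
  fix y assume "y \<in> set ys"
  then obtain i where "i \<in> set jumps" "y = Cod C (fst (fac i))" unfolding ys_def by auto
  then have "i < m" "y = Cod C (fst (fac i))" unfolding jumps_def by auto
  then show "y \<in> Ob C" using fac_arr(1) catD(1)[OF cat] by blast
qed

definition tA :: "('o, 'm) tmor" where
  "tA = \<lparr>tsrc = cs, ttgt = ys, tmap = map sg [0..<Suc m],
         tcomp = map (\<lambda>i. if J i then [fst (fac i)] else []) [0..<m]\<rparr>"

lemma sgmap: "i \<le> m \<Longrightarrow> map sg [0..<Suc m] ! i = sg i"
  by (simp del: upt_Suc)

lemma tA_sel[simp]: "tsrc tA = cs" "ttgt tA = ys" "tmap tA = map sg [0..<Suc m]"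
  unfolding tA_def by simp_all

lemma tA_comp: "i < m \<Longrightarrow> tcomp tA ! i = (if J i then [fst (fac i)] else [])"
  unfolding tA_def by simp

lemma tA_arrow: "tA \<in> theta_arrows C"
  unfolding theta_arrows_def
proof (intro CollectI conjI allI impI)
  show "set (tsrc tA) \<subseteq> Ob C" "set (ttgt tA) \<subseteq> Ob C" using cs_ob ys_ob by simp_all
  show "delta_mor (length (tsrc tA)) (length (ttgt tA)) (tmap tA)"
    unfolding delta_mor_def using sgmap sg_Suc sg_mono ys_len by (simp del: upt_Suc)
  show "length (tcomp tA) = length (tsrc tA)" unfolding tA_def by simp
  fix i assume i: "i < length (tsrc tA)"
  then have i': "i < m" by simp
  show "length (tcomp tA ! i) = tmap tA ! Suc i - tmap tA ! i"
    using tA_comp[OF i'] sgmap[of i] sgmap[of "Suc i"] i' sg_Suc[of i] by simp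
  fix k assume k: "k < length (tcomp tA ! i)"
  then have J: "J i" "k = 0" using tA_comp[OF i'] by (auto split: if_splits)
  have si: "sg i < sg m" using sg_mono[of "Suc i" m] i' sg_Suc[of i] J by simp
  show "tcomp tA ! i ! k \<in> Ar C" "Dom C (tcomp tA ! i ! k) = tsrc tA ! i"
      "Cod C (tcomp tA ! i ! k) = ttgt tA ! (tmap tA ! i + k)"
    using tA_comp[OF i'] J fac_arr[OF i'] ys_nth[OF si] jumps_sg[OF J(1) i'] sgmap[of i] i' by simp_all
qed

lemma tA_minus: "tA \<in> ThetaMinus C M"
  unfolding ThetaMinus_def
proof (intro CollectI conjI allI impI)
  show "tA \<in> theta_arrows C" by (rule tA_arrow)
  show "set (tmap tA) = {0..length (ttgt tA)}"
  proof
    show "set (tmap tA) \<subseteq> {0..length (ttgt tA)}" using sg_mono ys_len by (auto simp del: upt_Suc)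
    show "{0..length (ttgt tA)} \<subseteq> set (tmap tA)"
    proof
      fix v assume "v \<in> {0..length (ttgt tA)}"
      then have v: "v \<le> sg m" using ys_len by simp
      show "v \<in> set (tmap tA)"
      proof (cases "v = sg m")
        case True then show ?thesis by (simp del: upt_Suc)
      next
        case False
        then have "v < sg m" using v by simp
        then have "jumps ! v < m" "sg (jumps ! v) = v" using jumps_props by auto
        then show ?thesis by (simp del: upt_Suc) (intro image_eqI[of _ _ "jumps ! v"], auto)
      qed
    qed
  qed
  fix i assume i: "i < length (tsrc tA)" and lt: "tmap tA ! i < tmap tA ! Suc i"
  then have i': "i < m" by simp
  have "J i" using lt sgmap[of i] sgmap[of "Suc i"] i' sg_Suc[of i] by (auto split: if_splits)
  then show "tcomp tA ! i ! 0 \<in> M" using tA_comp[OF i'] fac_arr(2)[OF i'] by simp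
qed

definition Lb :: "nat \<Rightarrow> nat list" where "Lb i = map length (map (\<lambda>F. tcomp F ! i) Fs)"

lemma blk_map:
  assumes i: "i < m" and s: "s < u"
  shows "map (\<lambda>p. Cmp C p (fst (fac i))) (blocks (Lb i) (snd (fac i)) ! s) = tcomp (Fs ! s) ! i"
proof -
  have "map (\<lambda>p. Cmp C p (fst (fac i))) (snd (fac i)) = concat (map (\<lambda>F. tcomp F ! i) Fs)"
    using fac_arr(5)[OF i] unfolding mm_def by simp
  from blocks_nth_map[OF this] s show ?thesis unfolding Lb_def by simp
qed

lemma blk_set:
  assumes i: "i < m" and s: "s < u"
  shows "set (blocks (Lb i) (snd (fac i)) ! s) \<subseteq> set (snd (fac i))"
  using blocks_set[of s "Lb i"] s unfolding Lb_def by simp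

definition tB :: "nat \<Rightarrow> ('o, 'm) tmor" where
  "tB s = \<lparr>tsrc = ys, ttgt = ttgt (Fs ! s), tmap = map (\<lambda>r. al s ! r) reps,
     tcomp = map (\<lambda>k. blocks (Lb (jumps ! k)) (snd (fac (jumps ! k))) ! s) [0..<sg m]\<rparr>"

definition Bs :: "('o, 'm) tmor list" where "Bs = map tB [0..<u]"

lemma tB_sel[simp]: "tsrc (tB s) = ys" "ttgt (tB s) = ttgt (Fs ! s)" "tmap (tB s) = map (\<lambda>r. al s ! r) reps"
  unfolding tB_def by simp_all

lemma tB_comp: "k < sg m \<Longrightarrow> tcomp (tB s) ! k = blocks (Lb (jumps ! k)) (snd (fac (jumps ! k))) ! s"
  unfolding tB_def by simp

lemma tB_map: "k \<le> sg m \<Longrightarrow> tmap (tB s) ! k = al s ! (reps ! k)"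
  using reps_len by simp

lemma tB_arrow: assumes s: "s < u" shows "tB s \<in> theta_arrows C"
  unfolding theta_arrows_def
proof (intro CollectI conjI allI impI)
  show "set (tsrc (tB s)) \<subseteq> Ob C" "set (ttgt (tB s)) \<subseteq> Ob C"
    using ys_ob arrowD(2)[OF F_arr[OF s]] by simp_all
  show "delta_mor (length (tsrc (tB s))) (length (ttgt (tB s))) (tmap (tB s))"
    unfolding delta_mor_def
  proof (intro conjI allI impI)
    show "length (tmap (tB s)) = Suc (length (tsrc (tB s)))" using reps_len ys_len by simp
    fix k
    { assume k: "k < length (tsrc (tB s))"
      then have k': "k < sg m" using ys_len by simp
      have "reps ! k \<le> reps ! Suc k" using reps_le_jumps[OF k'] reps_Suc[OF k'] by simp
      moreover have "reps ! Suc k \<le> m" using reps_props[of "Suc k"] k' by simp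
      ultimately have "al s ! (reps ! k) \<le> al s ! (reps ! Suc k)" using al_chain[OF s] by simp
      then show "tmap (tB s) ! k \<le> tmap (tB s) ! Suc k" using tB_map[of k s] tB_map[of "Suc k" s] k' by simp }
    { assume k: "k \<le> length (tsrc (tB s))"
      then have k': "k \<le> sg m" using ys_len by simp
      have "reps ! k \<le> m" using reps_props[OF k'] by simp
      then show "tmap (tB s) ! k \<le> length (ttgt (tB s))" using tB_map[OF k'] al_bound[OF s] by simp }
  qed
  show "length (tcomp (tB s)) = length (tsrc (tB s))" unfolding tB_def using ys_len by simp
  fix k assume k: "k < length (tsrc (tB s))"
  then have k': "k < sg m" using ys_len by simp
  define i where "i = jumps ! k"
  have i: "i < m" "J i" "sg i = k" using jumps_props[OF k'] unfolding i_def by auto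
  have bm: "map (\<lambda>p. Cmp C p (fst (fac i))) (tcomp (tB s) ! k) = tcomp (Fs ! s) ! i"
    using blk_map[OF i(1) s] tB_comp[OF k'] unfolding i_def by simp
  have lenF: "length (tcomp (Fs ! s) ! i) = al s ! Suc i - al s ! i"
    using arrowD(5)[OF F_arr[OF s]] F_src[OF s] i by simp
  have t1: "tmap (tB s) ! k = al s ! i" using tB_map[of k s] k' al_reps_jumps[OF k' s] unfolding i_def by simp
  have t2: "tmap (tB s) ! Suc k = al s ! Suc i" using tB_map[of "Suc k" s] k' reps_Suc[OF k'] unfolding i_def by simp
  have len: "length (tcomp (tB s) ! k) = length (tcomp (Fs ! s) ! i)"
    using arg_cong[OF bm, of length] by simp
  show "length (tcomp (tB s) ! k) = tmap (tB s) ! Suc k - tmap (tB s) ! k"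
    using len lenF t1 t2 by simp
  fix r assume r: "r < length (tcomp (tB s) ! k)"
  have pin: "tcomp (tB s) ! k ! r \<in> set (snd (fac i))"
    using blk_set[OF i(1) s] tB_comp[OF k'] r unfolding i_def by auto
  have p: "tcomp (tB s) ! k ! r \<in> Ar C \<and> Dom C (tcomp (tB s) ! k ! r) = Cod C (fst (fac i))"
    by (rule fac_ps[OF i(1) pin])
  have e: "Cmp C (tcomp (tB s) ! k ! r) (fst (fac i)) = tcomp (Fs ! s) ! i ! r"
    using arg_cong[OF bm, of "\<lambda>l. l ! r"] r by simp
  have rF: "r < length (tcomp (Fs ! s) ! i)" using r len by simp
  have fF: "Cod C (tcomp (Fs ! s) ! i ! r) = ttgt (Fs ! s) ! (al s ! i + r)"
    using arrowD(6)[OF F_arr[OF s], of i r] F_src[OF s] i rF by simp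
  have "Cod C (Cmp C (tcomp (tB s) ! k ! r) (fst (fac i))) = Cod C (tcomp (tB s) ! k ! r)"
    using catD(3)[OF cat, of "fst (fac i)" "tcomp (tB s) ! k ! r"] fac_arr(1)[OF i(1)] p by simp
  then show "tcomp (tB s) ! k ! r \<in> Ar C" "Dom C (tcomp (tB s) ! k ! r) = tsrc (tB s) ! k"
       "Cod C (tcomp (tB s) ! k ! r) = ttgt (tB s) ! (tmap (tB s) ! k + r)"
    using p e fF t1 ys_nth[OF k'] unfolding i_def by simp_all
qed

end


lemma cmp_sel[simp]: "tsrc (theta_cmp C G F) = tsrc F" "ttgt (theta_cmp C G F) = ttgt G"
  "tmap (theta_cmp C G F) = map (\<lambda>a. tmap G ! a) (tmap F)"
  unfolding theta_cmp_def by simp_all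

lemma cmp_comp: "i < length (tsrc F) \<Longrightarrow> tcomp (theta_cmp C G F) ! i =
   concat (map (\<lambda>(f, j). map (\<lambda>g. Cmp C g f) (tcomp G ! j))
                     (zip (tcomp F ! i) [tmap F ! i ..< tmap F ! Suc i]))"
  unfolding theta_cmp_def by simp

context facto begin

lemma Bs_len[simp]: "length Bs = u" unfolding Bs_def by simp
lemma Bs_nth: "s < u \<Longrightarrow> Bs ! s = tB s" unfolding Bs_def by simp
lemma Bs_set: "B \<in> set Bs \<Longrightarrow> \<exists>s<u. B = tB s" unfolding Bs_def by auto

lemma tB_sep:
  assumes k: "k < k'" and k': "k' \<le> sg m"
  shows "\<exists>s<u. tmap (tB s) ! k \<noteq> tmap (tB s) ! k'"
proof -
  define k'' where "k'' = k' - 1"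
  have k'': "k'' < sg m" "k' = Suc k''" using k k' unfolding k''_def by auto
  define t where "t = jumps ! k''"
  have t: "t < m" "J t" "sg t = k''" using jumps_props[OF k''(1)] unfolding t_def by auto
  obtain s where s: "s < u" "al s ! t < al s ! Suc t" using t(2) unfolding J_def by auto
  have r: "reps ! k \<le> m \<and> sg (reps ! k) = k" using reps_props[of k] k k' by simp
  have "reps ! k \<le> t"
  proof (rule ccontr)
    assume "\<not> reps ! k \<le> t"
    then have "Suc t \<le> reps ! k" by simp
    then have "sg (Suc t) \<le> sg (reps ! k)" by (rule sg_mono)
    then show False using r sg_Suc[of t] t k k''(2) by simp
  qed
  then have "al s ! (reps ! k) \<le> al s ! t" using al_chain[OF s(1)] t by simp
  moreover have "tmap (tB s) ! k' = al s ! Suc t" using tB_map[OF k', of s] reps_Suc[OF k''(1)] k''(2) t_def by simp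
  moreover have "tmap (tB s) ! k = al s ! (reps ! k)" using tB_map[of k s] k k' by simp
  ultimately show ?thesis using s by auto
qed

lemma tB_plus: "(ys, Bs) \<in> ThetaPlus C P"
proof -
  have mm: "(ys, Bs) \<in> mmor (Theta C)"
    unfolding mmor_iff using ys_ob tB_arrow by (auto simp: Theta_def Bs_def)
  have mf: "mono_family (length ys) (map tmap Bs)"
    unfolding mono_family_points
  proof (intro allI impI)
    fix k k' assume k: "k \<le> length ys" "k' \<le> length ys" and e: "\<forall>\<alpha>\<in>set (map tmap Bs). \<alpha> ! k = \<alpha> ! k'"
    have e': "\<And>s. s < u \<Longrightarrow> tmap (tB s) ! k = tmap (tB s) ! k'"
      using e unfolding Bs_def by auto
    show "k = k'"
    proof (rule linorder_cases[of k k'])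
      assume "k < k'" then show ?thesis using tB_sep[of k k'] k ys_len e' by auto
    next
      assume "k' < k" then show ?thesis using tB_sep[of k' k] k ys_len e' by force
    qed
  qed
  have pc: "\<forall>k<length ys. (ys ! k, concat (map (\<lambda>F. tcomp F ! k) Bs)) \<in> P"
  proof (intro allI impI)
    fix k assume "k < length ys"
    then have k: "k < sg m" using ys_len by simp
    define i where "i = jumps ! k"
    have i: "i < m" "J i" "sg i = k" using jumps_props[OF k] unfolding i_def by auto
    have "map (\<lambda>F. tcomp F ! k) Bs = map (\<lambda>s. blocks (Lb i) (snd (fac i)) ! s) [0..<u]"
      unfolding Bs_def using tB_comp[OF k] i_def by simp
    also have "\<dots> = blocks (Lb i) (snd (fac i))"
      using map_nth[of "blocks (Lb i) (snd (fac i))"] unfolding Lb_def by simp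
    finally have "concat (map (\<lambda>F. tcomp F ! k) Bs) = snd (fac i)"
      using concat_blocks_map[of "\<lambda>p. Cmp C p (fst (fac i))" "snd (fac i)" "map (\<lambda>F. tcomp F ! i) Fs"]
        fac_arr(5)[OF i(1)] unfolding Lb_def mm_def by simp
    then show "(ys ! k, concat (map (\<lambda>F. tcomp F ! k) Bs)) \<in> P"
      using fac_arr(4)[OF i(1)] ys_nth[OF k] i_def by simp
  qed
  show ?thesis unfolding ThetaPlus_def using mm mf pc by simp
qed

lemma cmp_BA: assumes s: "s < u" shows "theta_cmp C (tB s) tA = Fs ! s"
proof (rule tmor.equality)
  show "tsrc (theta_cmp C (tB s) tA) = tsrc (Fs ! s)" using F_src[OF s] by simp
  show "ttgt (theta_cmp C (tB s) tA) = ttgt (Fs ! s)" by simp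
  show "tmap (theta_cmp C (tB s) tA) = tmap (Fs ! s)"
  proof (rule nth_equalityI)
    show "length (tmap (theta_cmp C (tB s) tA)) = length (tmap (Fs ! s))" using al_len[OF s] by simp
    fix i assume "i < length (tmap (theta_cmp C (tB s) tA))"
    then have i: "i \<le> m" by simp
    have "sg i \<le> sg m" using sg_mono i by simp
    then show "tmap (theta_cmp C (tB s) tA) ! i = tmap (Fs ! s) ! i"
      using sgmap[OF i] tB_map[of "sg i" s] al_reps_sg[OF i s] i by (simp del: upt_Suc)
  qed
  show "tcomp (theta_cmp C (tB s) tA) = tcomp (Fs ! s)"
  proof (rule nth_equalityI)
    show "length (tcomp (theta_cmp C (tB s) tA)) = length (tcomp (Fs ! s))"
      using arrowD(4)[OF F_arr[OF s]] F_src[OF s] by (simp add: theta_cmp_def)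
    fix i assume "i < length (tcomp (theta_cmp C (tB s) tA))"
    then have i: "i < m" by (simp add: theta_cmp_def)
    have tm: "tmap tA ! i = sg i" "tmap tA ! Suc i = sg (Suc i)" using sgmap[of i] sgmap[of "Suc i"] i by auto
    show "tcomp (theta_cmp C (tB s) tA) ! i = tcomp (Fs ! s) ! i"
    proof (cases "J i")
      case True
      have si: "sg i < sg m" using sg_mono[of "Suc i" m] i sg_Suc[of i] True by simp
      have "tcomp (theta_cmp C (tB s) tA) ! i = map (\<lambda>g. Cmp C g (fst (fac i))) (tcomp (tB s) ! sg i)"
        using cmp_comp[of i tA C "tB s"] i tA_comp[OF i] True tm sg_Suc[of i] by simp
      also have "\<dots> = tcomp (Fs ! s) ! i"
        using tB_comp[OF si] jumps_sg[OF True i] blk_map[OF i s] by simp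
      finally show ?thesis .
    next
      case False
      have "tcomp (theta_cmp C (tB s) tA) ! i = []"
        using cmp_comp[of i tA C "tB s"] i tA_comp[OF i] False by simp
      moreover have "length (tcomp (Fs ! s) ! i) = 0"
        using arrowD(5)[OF F_arr[OF s], of i] F_src[OF s] i notJ_eq[OF False s i] by simp
      ultimately show ?thesis by simp
    qed
  qed
  show "tmor.more (theta_cmp C (tB s) tA) = tmor.more (Fs ! s)" by simp
qed

end


locale uniq = facto +
  fixes a' and ps'
  assumes aM: "a' \<in> ThetaMinus C M" and asrc: "tsrc a' = cs"
    and pl: "(ttgt a', ps') \<in> ThetaPlus C P"
    and cods: "map ttgt ps' = map ttgt Fs"
    and eq: "Fs = map (\<lambda>p. theta_cmp C p a') ps'"
begin

abbreviation "x' \<equiv> length (ttgt a')"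
abbreviation "sg' \<equiv> tmap a'"

lemma a_arr: "a' \<in> theta_arrows C" using aM unfolding ThetaMinus_def by simp
lemma a_surj: "set sg' = {0..x'}" using aM unfolding ThetaMinus_def by simp
lemma a_comps: "i < m \<Longrightarrow> sg' ! i < sg' ! Suc i \<Longrightarrow> tcomp a' ! i ! 0 \<in> M"
  using aM asrc unfolding ThetaMinus_def by auto
lemma ps_len: "length ps' = u" using eq by simp
lemma ps_arr: "p \<in> set ps' \<Longrightarrow> p \<in> theta_arrows C \<and> tsrc p = ttgt a'"
  using pl unfolding ThetaPlus_def mmor_iff by (auto simp: Theta_def)
lemma ps_mf: "mono_family x' (map tmap ps')" using pl unfolding ThetaPlus_def by simp
lemma ps_pc: "k < x' \<Longrightarrow> (ttgt a' ! k, concat (map (\<lambda>F. tcomp F ! k) ps')) \<in> P"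
  using pl unfolding ThetaPlus_def by simp
lemma Fs_nth: "s < u \<Longrightarrow> Fs ! s = theta_cmp C (ps' ! s) a'"
  using eq ps_len by (metis nth_map)

lemma a_len: "length sg' = Suc m" using arrow_len[OF a_arr] asrc by simp
lemma a_mono: "i < m \<Longrightarrow> sg' ! i \<le> sg' ! Suc i" using arrow_mono[OF a_arr] asrc by simp
lemma a_bound: "i \<le> m \<Longrightarrow> sg' ! i \<le> x'" using arrow_bound[OF a_arr] asrc by simp

lemma al_ps: "s < u \<Longrightarrow> i \<le> m \<Longrightarrow> al s ! i = tmap (ps' ! s) ! (sg' ! i)"
  using Fs_nth a_len by simp

lemma sg'0: "sg' ! 0 = 0"
proof -
  have "0 \<in> set sg'" using a_surj by simp
  then obtain t where t: "t < length sg'" "sg' ! t = 0" by (auto simp: in_set_conv_nth)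
  have "sg' ! 0 \<le> sg' ! t" using mono_chain[OF arrow_mono[OF a_arr], of 0 t] t a_len asrc by simp
  then show ?thesis using t by simp
qed

lemma sg'_step: assumes i: "i < m" shows "sg' ! Suc i \<le> Suc (sg' ! i)"
proof (rule ccontr)
  assume "\<not> sg' ! Suc i \<le> Suc (sg' ! i)"
  then have big: "Suc (sg' ! i) < sg' ! Suc i" by simp
  have "Suc (sg' ! i) \<le> x'" using big a_bound[of "Suc i"] i by simp
  then have "Suc (sg' ! i) \<in> set sg'" using a_surj by simp
  then obtain t where t: "t < length sg'" "sg' ! t = Suc (sg' ! i)" by (auto simp: in_set_conv_nth)
  have tm: "t \<le> m" using t a_len by simp
  have ch: "\<And>a b. a \<le> b \<Longrightarrow> b \<le> m \<Longrightarrow> sg' ! a \<le> sg' ! b"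
    using mono_chain[OF arrow_mono[OF a_arr]] asrc by simp
  show False
  proof (cases "t \<le> i")
    case True then show False using ch[of t i] t i by simp
  next
    case False then show False using ch[of "Suc i" t] t tm big by simp
  qed
qed

lemma mf_pts: "k \<le> x' \<Longrightarrow> k' \<le> x' \<Longrightarrow> (\<And>s. s < u \<Longrightarrow> tmap (ps' ! s) ! k = tmap (ps' ! s) ! k') \<Longrightarrow> k = k'"
proof -
  assume k: "k \<le> x'" "k' \<le> x'" and e: "\<And>s. s < u \<Longrightarrow> tmap (ps' ! s) ! k = tmap (ps' ! s) ! k'"
  have "\<forall>\<alpha>\<in>set (map tmap ps'). \<alpha> ! k = \<alpha> ! k'"
  proof
    fix \<alpha> assume "\<alpha> \<in> set (map tmap ps')"
    then obtain s where "s < u" "\<alpha> = tmap (ps' ! s)" using ps_len by (auto simp: in_set_conv_nth)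
    then show "\<alpha> ! k = \<alpha> ! k'" using e by simp
  qed
  then show "k = k'" using ps_mf k unfolding mono_family_points by blast
qed

lemma sg'_eq: "i \<le> m \<Longrightarrow> sg' ! i = sg i"
proof (induction i)
  case 0 then show ?case using sg'0 by simp
next
  case (Suc i)
  then have i: "i < m" by simp
  have IH: "sg' ! i = sg i" using Suc by simp
  show ?case
  proof (cases "J i")
    case True
    then obtain s where s: "s < u" "al s ! i < al s ! Suc i" unfolding J_def by auto
    then have "sg' ! i \<noteq> sg' ! Suc i" using al_ps[OF s(1), of i] al_ps[OF s(1), of "Suc i"] i by auto
    then have "sg' ! Suc i = Suc (sg' ! i)" using sg'_step[OF i] a_mono[OF i] by simp
    then show ?thesis using IH sg_Suc[of i] True by simp
  next
    case False
    have "\<And>s. s < u \<Longrightarrow> tmap (ps' ! s) ! (sg' ! i) = tmap (ps' ! s) ! (sg' ! Suc i)"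
      using al_ps notJ_eq[OF False _ i] i by (metis Suc_leI less_imp_le_nat)
    then have "sg' ! i = sg' ! Suc i" using mf_pts a_bound i by simp
    then show ?thesis using IH sg_Suc[of i] False by simp
  qed
qed

lemma tmap_a: "sg' = map sg [0..<Suc m]"
  by (rule nth_equalityI) (use a_len sg'_eq in \<open>simp_all del: upt_Suc\<close>)

lemma x'_eq: "x' = sg m"
proof -
  have "x' \<in> set sg'" using a_surj by simp
  then obtain t where t: "t < length sg'" "sg' ! t = x'" by (auto simp: in_set_conv_nth)
  have "sg' ! t \<le> sg' ! m" using mono_chain[OF arrow_mono[OF a_arr], of t m] t a_len asrc by simp
  then show ?thesis using t a_bound[of m] sg'_eq[of m] by simp
qed

definition ee where "ee i = tcomp a' ! i ! 0"
definition QQ where "QQ i = concat (map (\<lambda>p. tcomp p ! sg i) ps')"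

lemma jump_comp:
  assumes i: "i < m" and J: "J i"
  shows "tcomp a' ! i = [ee i]"
    "\<And>p. tcomp (theta_cmp C p a') ! i = map (\<lambda>g. Cmp C g (ee i)) (tcomp p ! sg i)"
proof -
  have l: "length (tcomp a' ! i) = 1"
    using arrowD(5)[OF a_arr, of i] asrc i sg'_eq[of i] sg'_eq[of "Suc i"] sg_Suc[of i] J by simp
  then show t: "tcomp a' ! i = [ee i]" unfolding ee_def by (cases "tcomp a' ! i") auto
  fix p
  have "[sg' ! i..<sg' ! Suc i] = [sg i]" using sg'_eq[of i] sg'_eq[of "Suc i"] i sg_Suc[of i] J by simp
  then show "tcomp (theta_cmp C p a') ! i = map (\<lambda>g. Cmp C g (ee i)) (tcomp p ! sg i)"
    using cmp_comp[of i a' C p] asrc i t by simp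
qed

lemma jump_fac:
  assumes i: "i < m" and J: "J i"
  shows "fac i = (ee i, QQ i)"
proof (rule fac_uniq[OF i])
  have si: "sg i < x'" using sg_mono[of "Suc i" m] i sg_Suc[of i] J x'_eq by simp
  have len: "length (tcomp a' ! i) = 1" using jump_comp(1)[OF i J] by simp
  have e: "ee i \<in> Ar C \<and> Dom C (ee i) = cs ! i \<and> Cod C (ee i) = ttgt a' ! sg i"
    using arrowD(6)[OF a_arr, of i 0] asrc i len sg'_eq[of i] unfolding ee_def by simp
  have eM: "ee i \<in> M" using a_comps[OF i] sg'_eq[of i] sg'_eq[of "Suc i"] i sg_Suc[of i] J unfolding ee_def by simp
  have P1: "(Cod C (ee i), QQ i) \<in> P" using ps_pc[OF si] e unfolding QQ_def by simp
  have mmq: "mm i = map (\<lambda>g. Cmp C g (ee i)) (QQ i)"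
  proof -
    have "mm i = concat (map (\<lambda>p. tcomp (theta_cmp C p a') ! i) ps')"
      unfolding mm_def by (subst eq) (simp add: o_def)
    also have "\<dots> = concat (map (\<lambda>p. map (\<lambda>g. Cmp C g (ee i)) (tcomp p ! sg i)) ps')"
      using jump_comp(2)[OF i J] by simp
    also have "\<dots> = map (\<lambda>g. Cmp C g (ee i)) (QQ i)" unfolding QQ_def by (simp add: map_concat o_def)
    finally show ?thesis .
  qed
  have cods2: "map (Cod C) (QQ i) = map (Cod C) (mm i)"
    unfolding mmq map_map
  proof (rule map_cong[OF refl])
    fix g assume "g \<in> set (QQ i)"
    then have g: "g \<in> Ar C" "Dom C g = Cod C (ee i)" using P1 Psub unfolding mmor_def by auto
    show "Cod C g = (Cod C \<circ> (\<lambda>g. Cmp C g (ee i))) g"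
      using catD(3)[OF cat, of "ee i" g] e g by simp
  qed
  show "facP i (ee i) (QQ i)" unfolding facP_def using eM e P1 cods2 mmq by simp
qed

end


context uniq begin

lemma tcomp_a: "tcomp a' = tcomp tA"
proof (rule nth_equalityI)
  show "length (tcomp a') = length (tcomp tA)" using arrowD(4)[OF a_arr] asrc tA_arrow arrowD(4) by (simp add: tA_def)
  fix i assume "i < length (tcomp a')"
  then have i: "i < m" using arrowD(4)[OF a_arr] asrc by simp
  show "tcomp a' ! i = tcomp tA ! i"
  proof (cases "J i")
    case True
    then show ?thesis using jump_comp(1)[OF i True] jump_fac[OF i True] tA_comp[OF i] by simp
  next
    case False
    have "length (tcomp a' ! i) = 0"
      using arrowD(5)[OF a_arr, of i] asrc i sg'_eq[of i] sg'_eq[of "Suc i"] sg_Suc[of i] False by simp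
    then show ?thesis using tA_comp[OF i] False by simp
  qed
qed

lemma ttgt_a: "ttgt a' = ys"
proof (rule nth_equalityI)
  show "length (ttgt a') = length ys" using x'_eq ys_len by simp
  fix k assume "k < length (ttgt a')"
  then have k: "k < sg m" using x'_eq by simp
  define i where "i = jumps ! k"
  have i: "i < m" "J i" "sg i = k" using jumps_props[OF k] unfolding i_def by auto
  have len: "length (tcomp a' ! i) = 1" using jump_comp(1)[OF i(1,2)] by simp
  have "Cod C (ee i) = ttgt a' ! k"
    using arrowD(6)[OF a_arr, of i 0] asrc i len sg'_eq[of i] unfolding ee_def by simp
  then show "ttgt a' ! k = ys ! k" using ys_nth[OF k] jump_fac[OF i(1,2)] i_def by simp
qed

lemma a_eq: "a' = tA"
  by (rule tmor.equality) (simp_all add: asrc tmap_a tcomp_a ttgt_a)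

lemma ps_eq: "ps' = Bs"
proof (rule nth_equalityI)
  show "length ps' = length Bs" using ps_len by simp
  fix s assume "s < length ps'"
  then have s: "s < u" using ps_len by simp
  have p: "ps' ! s \<in> theta_arrows C \<and> tsrc (ps' ! s) = ttgt a'" using ps_arr[of "ps' ! s"] s ps_len by simp
  have tg: "ttgt (ps' ! s) = ttgt (Fs ! s)" using arg_cong[OF cods, of "\<lambda>l. l ! s"] s ps_len by simp
  have tm: "tmap (ps' ! s) = tmap (tB s)"
  proof (rule nth_equalityI)
    show "length (tmap (ps' ! s)) = length (tmap (tB s))"
      using arrow_len[of "ps' ! s" C] p x'_eq reps_len by simp
    fix k assume "k < length (tmap (ps' ! s))"
    then have k: "k \<le> sg m" using arrow_len[of "ps' ! s" C] p x'_eq by simp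
    have r: "reps ! k \<le> m \<and> sg (reps ! k) = k" by (rule reps_props[OF k])
    have "al s ! (reps ! k) = tmap (ps' ! s) ! k" using al_ps[OF s, of "reps ! k"] r sg'_eq[of "reps ! k"] by simp
    then show "tmap (ps' ! s) ! k = tmap (tB s) ! k" using tB_map[OF k] by simp
  qed
  have tc: "tcomp (ps' ! s) = tcomp (tB s)"
  proof (rule nth_equalityI)
    show "length (tcomp (ps' ! s)) = length (tcomp (tB s))"
      using arrowD(4)[of "ps' ! s" C] p x'_eq by (simp add: tB_def)
    fix k assume "k < length (tcomp (ps' ! s))"
    then have k: "k < sg m" using arrowD(4)[of "ps' ! s" C] p x'_eq by simp
    define i where "i = jumps ! k"
    have i: "i < m" "J i" "sg i = k" using jumps_props[OF k] unfolding i_def by auto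
    have Lb: "Lb i = map length (map (\<lambda>p. tcomp p ! k) ps')"
    proof -
      have "map (\<lambda>F. tcomp F ! i) Fs = map (\<lambda>p. map (\<lambda>g. Cmp C g (ee i)) (tcomp p ! k)) ps'"
        by (subst eq) (simp add: o_def jump_comp(2)[OF i(1,2)] i(3))
      then show ?thesis unfolding Lb_def by (simp add: o_def)
    qed
    have "tcomp (tB s) ! k = blocks (Lb i) (QQ i) ! s" using tB_comp[OF k] jump_fac[OF i(1,2)] i_def by simp
    also have "\<dots> = map (\<lambda>p. tcomp p ! k) ps' ! s"
      unfolding Lb QQ_def i(3) by (subst blocks_concat_eq) simp_all
    also have "\<dots> = tcomp (ps' ! s) ! k" using s ps_len by simp
    finally show "tcomp (ps' ! s) ! k = tcomp (tB s) ! k" by simp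
  qed
  show "ps' ! s = Bs ! s" unfolding Bs_nth[OF s]
    by (rule tmor.equality) (simp_all add: p tg tm tc a_eq)
qed

end


lemma Theta_sel[simp]: "Ob (Theta C) = {cs. set cs \<subseteq> Ob C}" "Ar (Theta C) = theta_arrows C"
  "Dom (Theta C) = tsrc" "Cod (Theta C) = ttgt" "Cmp (Theta C) = theta_cmp C" "Id (Theta C) = theta_id C"
  unfolding Theta_def by simp_all

lemma theta_fact:
  assumes MR: "multi_reedy C M P deg"
  shows "\<forall>(c, fs)\<in>mmor (Theta C). \<exists>!(a, ps). a \<in> ThetaMinus C M \<and> Dom (Theta C) a = c \<and>
     (Cod (Theta C) a, ps) \<in> ThetaPlus C P \<and> map (Cod (Theta C)) ps = map (Cod (Theta C)) fs \<and>
     fs = map (\<lambda>p. Cmp (Theta C) p a) ps"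
proof (intro ballI)
  fix cfs assume cfs: "cfs \<in> mmor (Theta C)"
  obtain c fs where cfs_eq: "cfs = (c, fs)" by (cases cfs)
  interpret facto C M P deg c fs using MR cfs cfs_eq by unfold_locales simp_all
  have ex: "tA \<in> ThetaMinus C M \<and> tsrc tA = c \<and> (ttgt tA, Bs) \<in> ThetaPlus C P \<and>
      map ttgt Bs = map ttgt fs \<and> fs = map (\<lambda>p. theta_cmp C p tA) Bs"
  proof (intro conjI)
    show "tA \<in> ThetaMinus C M" by (rule tA_minus)
    show "tsrc tA = c" by simp
    show "(ttgt tA, Bs) \<in> ThetaPlus C P" using tB_plus by simp
    show "map ttgt Bs = map ttgt fs" by (rule nth_equalityI) (simp_all add: Bs_nth)
    show "fs = map (\<lambda>p. theta_cmp C p tA) Bs" by (rule nth_equalityI) (simp_all add: Bs_nth cmp_BA)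
  qed
  have un: "\<And>a' ps'. a' \<in> ThetaMinus C M \<and> tsrc a' = c \<and> (ttgt a', ps') \<in> ThetaPlus C P \<and>
      map ttgt ps' = map ttgt fs \<and> fs = map (\<lambda>p. theta_cmp C p a') ps' \<Longrightarrow> a' = tA \<and> ps' = Bs"
  proof -
    fix a' ps' assume h: "a' \<in> ThetaMinus C M \<and> tsrc a' = c \<and> (ttgt a', ps') \<in> ThetaPlus C P \<and>
      map ttgt ps' = map ttgt fs \<and> fs = map (\<lambda>p. theta_cmp C p a') ps'"
    interpret uniq C M P deg c fs a' ps' using h by unfold_locales simp_all
    show "a' = tA \<and> ps' = Bs" using a_eq ps_eq by simp
  qed
  show "case cfs of (c, fs) \<Rightarrow> \<exists>!(a, ps). a \<in> ThetaMinus C M \<and> Dom (Theta C) a = c \<and>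
     (Cod (Theta C) a, ps) \<in> ThetaPlus C P \<and> map (Cod (Theta C)) ps = map (Cod (Theta C)) fs \<and>
     fs = map (\<lambda>p. Cmp (Theta C) p a) ps"
    unfolding cfs_eq prod.case Theta_sel
  proof (rule ex1I[of _ "(tA, Bs)"])
    show "case (tA, Bs) of (a, ps) \<Rightarrow> a \<in> ThetaMinus C M \<and> tsrc a = c \<and> (ttgt a, ps) \<in> ThetaPlus C P \<and>
      map ttgt ps = map ttgt fs \<and> fs = map (\<lambda>p. theta_cmp C p a) ps" using ex by simp
    fix x assume "case x of (a, ps) \<Rightarrow> a \<in> ThetaMinus C M \<and> tsrc a = c \<and> (ttgt a, ps) \<in> ThetaPlus C P \<and>
      map ttgt ps = map ttgt fs \<and> fs = map (\<lambda>p. theta_cmp C p a) ps"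
    then show "x = (tA, Bs)" using un by (cases x) auto
  qed
qed

lemma mr_reedy:
  assumes MR: "multi_reedy C M P deg"
  shows "reedy C M {f \<in> Ar C. (Dom C f, [f]) \<in> P} deg"
proof -
  have cat: "is_category C" using MR unfolding multi_reedy_def by (elim conjE) assumption
  have wsM: "wide_subcat C M" using MR unfolding multi_reedy_def by (elim conjE) assumption
  have wsP: "wide_submulticat C P" using MR unfolding multi_reedy_def by (elim conjE) assumption
  have fact: "\<forall>(c, fs)\<in>mmor C. \<exists>!(a, ps). a \<in> M \<and> Dom C a = c \<and> (Cod C a, ps) \<in> P \<and>
         map (Cod C) ps = map (Cod C) fs \<and> fs = map (\<lambda>p. Cmp C p a) ps"
    using MR unfolding multi_reedy_def by (elim conjE) assumption
  have degP: "\<forall>(c, fs)\<in>P. deg c \<le> sum_list (map (\<lambda>f. deg (Cod C f)) fs)"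
    using MR unfolding multi_reedy_def by (elim conjE) assumption
  have idP: "\<forall>f\<in>Ar C. (Dom C f, [f]) \<in> P \<longrightarrow> (deg (Dom C f) = deg (Cod C f) \<longleftrightarrow> f = Id C (Dom C f))"
    using MR unfolding multi_reedy_def by (elim conjE) assumption
  have degM: "\<forall>f\<in>M. deg (Cod C f) \<le> deg (Dom C f) \<and> (deg (Dom C f) = deg (Cod C f) \<longleftrightarrow> f = Id C (Dom C f))"
    using MR unfolding multi_reedy_def by (elim conjE) assumption
  have Psub: "P \<subseteq> mmor C" using wsP unfolding wide_submulticat_def by (elim conjE) assumption
  have Pid: "\<forall>c\<in>Ob C. (c, [Id C c]) \<in> P" using wsP unfolding wide_submulticat_def by (elim conjE) assumption
  have Pcomp: "\<forall>c fs gss. (c, fs) \<in> P \<longrightarrow> length gss = length fs \<longrightarrow>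
        (\<forall>s<length fs. (Cod C (fs ! s), gss ! s) \<in> P) \<longrightarrow> mcomp C (c, fs) gss \<in> P"
    using wsP unfolding wide_submulticat_def by (elim conjE) assumption
  let ?Mp = "{f \<in> Ar C. (Dom C f, [f]) \<in> P}"
  have wsMp: "wide_subcat C ?Mp"
    unfolding wide_subcat_def
  proof (intro conjI ballI impI)
    show "?Mp \<subseteq> Ar C" by auto
    fix c assume c: "c \<in> Ob C"
    show "Id C c \<in> ?Mp" using catD(2)[OF cat c] Pid c by simp
  next
    fix f g assume f: "f \<in> ?Mp" and g: "g \<in> ?Mp" and fg: "Cod C f = Dom C g"
    have "mcomp C (Dom C f, [f]) [[g]] \<in> P" using Pcomp f g fg by simp
    moreover have "mcomp C (Dom C f, [f]) [[g]] = (Dom C f, [Cmp C g f])" unfolding mcomp_def by simp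
    ultimately show "Cmp C g f \<in> ?Mp" using catD(3)[OF cat, of f g] f g fg by simp
  qed
  have fr: "\<forall>f\<in>Ar C. \<exists>!(a, p). a \<in> M \<and> p \<in> ?Mp \<and> Dom C a = Dom C f \<and>
         Cod C a = Dom C p \<and> Cod C p = Cod C f \<and> f = Cmp C p a"
  proof
    fix f assume f: "f \<in> Ar C"
    have "(Dom C f, [f]) \<in> mmor C" using catD(1)[OF cat f] f unfolding mmor_def by simp
    from bspec[OF fact this]
    have E: "\<exists>!(a, ps). a \<in> M \<and> Dom C a = Dom C f \<and> (Cod C a, ps) \<in> P \<and>
         map (Cod C) ps = map (Cod C) [f] \<and> [f] = map (\<lambda>p. Cmp C p a) ps" by (simp only: prod.case)
    obtain x1 where x0: "case x1 of (a, ps) \<Rightarrow> a \<in> M \<and> Dom C a = Dom C f \<and> (Cod C a, ps) \<in> P \<and>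
         map (Cod C) ps = map (Cod C) [f] \<and> [f] = map (\<lambda>p. Cmp C p a) ps"
      using ex1_implies_ex[OF E] by (rule exE)
    obtain a ps where x0e: "x1 = (a, ps)" by (cases x1)
    have aps: "a \<in> M \<and> Dom C a = Dom C f \<and> (Cod C a, ps) \<in> P \<and>
         map (Cod C) ps = map (Cod C) [f] \<and> [f] = map (\<lambda>p. Cmp C p a) ps" using x0 unfolding x0e prod.case .
    obtain p where ps: "ps = [p]" using aps by (cases ps) auto
    have pin: "p \<in> Ar C \<and> Dom C p = Cod C a" using aps Psub ps unfolding mmor_def by auto
    show "\<exists>!(a, p). a \<in> M \<and> p \<in> ?Mp \<and> Dom C a = Dom C f \<and>
         Cod C a = Dom C p \<and> Cod C p = Cod C f \<and> f = Cmp C p a"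
    proof (rule ex1I[of _ "(a, p)"])
      show "case (a, p) of (a, p) \<Rightarrow> a \<in> M \<and> p \<in> ?Mp \<and> Dom C a = Dom C f \<and>
         Cod C a = Dom C p \<and> Cod C p = Cod C f \<and> f = Cmp C p a" using aps ps pin by auto
      fix x assume x: "case x of (a, p) \<Rightarrow> a \<in> M \<and> p \<in> ?Mp \<and> Dom C a = Dom C f \<and>
         Cod C a = Dom C p \<and> Cod C p = Cod C f \<and> f = Cmp C p a"
      obtain a' p' where x': "x = (a', p')" by (cases x)
      have "a' \<in> M \<and> Dom C a' = Dom C f \<and> (Cod C a', [p']) \<in> P \<and>
         map (Cod C) [p'] = map (Cod C) [f] \<and> [f] = map (\<lambda>p. Cmp C p a') [p']" using x x' by auto
      then have h1: "case (a', [p']) of (a, ps) \<Rightarrow> a \<in> M \<and> Dom C a = Dom C f \<and> (Cod C a, ps) \<in> P \<and>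
         map (Cod C) ps = map (Cod C) [f] \<and> [f] = map (\<lambda>p. Cmp C p a) ps" by (simp only: prod.case)
      have "(a', [p']) = x1" using the1_equality[OF E h1] the1_equality[OF E x0] by simp
      then have "(a', [p']) = (a, ps)" using x0e by simp
      then show "x = (a, p)" using x' ps by simp
    qed
  qed
  have dp: "\<forall>f\<in>?Mp. deg (Dom C f) \<le> deg (Cod C f) \<and> (deg (Dom C f) = deg (Cod C f) \<longleftrightarrow> f = Id C (Dom C f))"
  proof
    fix f assume f: "f \<in> ?Mp"
    then have "deg (Dom C f) \<le> sum_list (map (\<lambda>f. deg (Cod C f)) [f])" using degP by blast
    moreover have "deg (Dom C f) = deg (Cod C f) \<longleftrightarrow> f = Id C (Dom C f)" using idP f by blast
    ultimately show "deg (Dom C f) \<le> deg (Cod C f) \<and> (deg (Dom C f) = deg (Cod C f) \<longleftrightarrow> f = Id C (Dom C f))" by simp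
  qed
  show ?thesis unfolding reedy_def by (intro conjI cat wsM wsMp fr dp degM)
qed


lemma minusD:
  assumes "F \<in> ThetaMinus C M"
  shows "F \<in> theta_arrows C" "set (tmap F) = {0..length (ttgt F)}"
    "\<And>i. i < length (tsrc F) \<Longrightarrow> tmap F ! i < tmap F ! Suc i \<Longrightarrow> tcomp F ! i ! 0 \<in> M"
  using assms unfolding ThetaMinus_def by auto

lemma minus_0: assumes F: "F \<in> ThetaMinus C M" shows "tmap F ! 0 = 0"
proof -
  have "0 \<in> set (tmap F)" using minusD(2)[OF F] by simp
  then obtain t where t: "t < length (tmap F)" "tmap F ! t = 0" by (auto simp: in_set_conv_nth)
  have "tmap F ! 0 \<le> tmap F ! t"
    using mono_chain[OF arrow_mono[OF minusD(1)[OF F]], of 0 t] t arrow_len[OF minusD(1)[OF F]] by simp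
  then show ?thesis using t by simp
qed

lemma minus_last: assumes F: "F \<in> ThetaMinus C M" shows "tmap F ! length (tsrc F) = length (ttgt F)"
proof -
  have A: "F \<in> theta_arrows C" by (rule minusD(1)[OF F])
  have "length (ttgt F) \<in> set (tmap F)" using minusD(2)[OF F] by simp
  then obtain t where t: "t < length (tmap F)" "tmap F ! t = length (ttgt F)" by (auto simp: in_set_conv_nth)
  have "tmap F ! t \<le> tmap F ! length (tsrc F)"
    using mono_chain[OF arrow_mono[OF A], of t] t arrow_len[OF A] by simp
  then show ?thesis using t arrow_bound[OF A, of "length (tsrc F)"] by simp
qed

lemma minus_step:
  assumes F: "F \<in> ThetaMinus C M" and i: "i < length (tsrc F)"
  shows "tmap F ! Suc i \<le> Suc (tmap F ! i)"
proof (rule ccontr)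
  have A: "F \<in> theta_arrows C" by (rule minusD(1)[OF F])
  assume "\<not> tmap F ! Suc i \<le> Suc (tmap F ! i)"
  then have big: "Suc (tmap F ! i) < tmap F ! Suc i" by simp
  have "Suc (tmap F ! i) \<le> length (ttgt F)" using big arrow_bound[OF A, of "Suc i"] i by simp
  then have "Suc (tmap F ! i) \<in> set (tmap F)" using minusD(2)[OF F] by simp
  then obtain t where t: "t < length (tmap F)" "tmap F ! t = Suc (tmap F ! i)" by (auto simp: in_set_conv_nth)
  have tm: "t \<le> length (tsrc F)" using t arrow_len[OF A] by simp
  have ch: "\<And>a b. a \<le> b \<Longrightarrow> b \<le> length (tsrc F) \<Longrightarrow> tmap F ! a \<le> tmap F ! b"
    using mono_chain[OF arrow_mono[OF A]] by simp
  show False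
  proof (cases "t \<le> i")
    case True then show False using ch[of t i] t i by simp
  next
    case False then show False using ch[of "Suc i" t] t tm big by simp
  qed
qed

lemma minus_wide:
  assumes MR: "multi_reedy C M P deg"
  shows "wide_subcat (Theta C) (ThetaMinus C M)"
proof -
  have cat: "is_category C" using MR unfolding multi_reedy_def by (elim conjE) assumption
  have wsM: "wide_subcat C M" using MR unfolding multi_reedy_def by (elim conjE) assumption
  have Mid: "\<And>c. c \<in> Ob C \<Longrightarrow> Id C c \<in> M" using wsM unfolding wide_subcat_def by blast
  have Mcmp: "\<And>f g. f \<in> M \<Longrightarrow> g \<in> M \<Longrightarrow> Cod C f = Dom C g \<Longrightarrow> Cmp C g f \<in> M"
    using wsM unfolding wide_subcat_def by blast
  have "\<And>cs. set cs \<subseteq> Ob C \<Longrightarrow> theta_id C cs \<in> ThetaMinus C M"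
  proof -
    fix cs :: "'a list" assume cs: "set cs \<subseteq> Ob C"
    have "\<And>i. i < length cs \<Longrightarrow> tcomp (theta_id C cs) ! i ! 0 \<in> M"
      using Mid cs unfolding theta_id_def by (auto simp: subset_code(1))
    then show "theta_id C cs \<in> ThetaMinus C M"
      unfolding ThetaMinus_def using id_arrow[OF cat cs] by (auto simp del: upt_Suc)
  qed
  moreover have "\<And>F G. F \<in> ThetaMinus C M \<Longrightarrow> G \<in> ThetaMinus C M \<Longrightarrow> ttgt F = tsrc G \<Longrightarrow>
      theta_cmp C G F \<in> ThetaMinus C M"
  proof -
    fix F G assume F: "F \<in> ThetaMinus C M" and G: "G \<in> ThetaMinus C M" and FG: "ttgt F = tsrc G"
    have AF: "F \<in> theta_arrows C" and AG: "G \<in> theta_arrows C" using minusD(1) F G by auto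
    have GF: "theta_cmp C G F \<in> theta_arrows C" by (rule cmp_arrow[OF cat AF AG FG])
    have setc: "set (tmap (theta_cmp C G F)) = {0..length (ttgt (theta_cmp C G F))}"
    proof -
      have "set (tmap (theta_cmp C G F)) = (\<lambda>a. tmap G ! a) ` set (tmap F)" by simp
      also have "\<dots> = (\<lambda>a. tmap G ! a) ` {0..<length (tmap G)}" using minusD(2)[OF F] FG arrow_len[OF AG] atLeastLessThanSuc_atLeastAtMost by simp
      also have "\<dots> = set (tmap G)" by (simp add: set_conv_nth image_def atLeast0LessThan) blast
      finally show ?thesis using minusD(2)[OF G] by simp
    qed
    have comps: "\<And>i. i < length (tsrc (theta_cmp C G F)) \<Longrightarrow>
        tmap (theta_cmp C G F) ! i < tmap (theta_cmp C G F) ! Suc i \<Longrightarrow> tcomp (theta_cmp C G F) ! i ! 0 \<in> M"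
    proof -
      fix i assume i0: "i < length (tsrc (theta_cmp C G F))"
        and lt0: "tmap (theta_cmp C G F) ! i < tmap (theta_cmp C G F) ! Suc i"
      have i: "i < length (tsrc F)" using i0 by simp
      have lt: "tmap G ! (tmap F ! i) < tmap G ! (tmap F ! Suc i)" using lt0 i arrow_len[OF AF] by simp
      then have ne: "tmap F ! i \<noteq> tmap F ! Suc i" by auto
      have jF: "tmap F ! Suc i = Suc (tmap F ! i)"
        using ne minus_step[OF F i] arrow_mono[OF AF] i by (metis le_SucE le_antisym)
      define j where "j = tmap F ! i"
      have j: "j < length (tsrc G)" using arrow_bound[OF AF, of "Suc i"] i jF FG unfolding j_def by simp
      have ltG: "tmap G ! j < tmap G ! Suc j" using lt jF unfolding j_def by simp
      have jG: "tmap G ! Suc j = Suc (tmap G ! j)"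
        using ltG minus_step[OF G j] by simp
      have lF: "length (tcomp F ! i) = 1" using arrowD(5)[OF AF i] jF by simp
      have lG: "length (tcomp G ! j) = 1" using arrowD(5)[OF AG j] jG by simp
      have fM: "tcomp F ! i ! 0 \<in> M" using minusD(3)[OF F i] jF by simp
      have gM: "tcomp G ! j ! 0 \<in> M" using minusD(3)[OF G j] ltG by simp
      have fc: "Cod C (tcomp F ! i ! 0) = ttgt F ! j" using arrowD(6)[OF AF i, of 0] lF unfolding j_def by simp
      have gd: "Dom C (tcomp G ! j ! 0) = tsrc G ! j" using arrowD(6)[OF AG j, of 0] lG by simp
      obtain f where tF: "tcomp F ! i = [f]" using lF by (cases "tcomp F ! i") auto
      obtain g where tG: "tcomp G ! j = [g]" using lG by (cases "tcomp G ! j") auto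
      have jj: "[tmap F ! i..<tmap F ! Suc i] = [j]" using jF unfolding j_def by simp
      have "tcomp (theta_cmp C G F) ! i = [Cmp C g f]"
        using cmp_comp[OF i, of C G] tF tG jj by simp
      then show "tcomp (theta_cmp C G F) ! i ! 0 \<in> M" using Mcmp[of f g] fM gM fc gd FG tF tG by simp
    qed
    show "theta_cmp C G F \<in> ThetaMinus C M" unfolding ThetaMinus_def using GF setc comps by blast
  qed
  ultimately show ?thesis unfolding wide_subcat_def Theta_sel using minusD(1) by blast
qed


lemma sum_list_map_nth: "sum_list (map f xs) = (\<Sum>t<length xs. f (xs ! t))"
  by (simp add: sum_list_sum_nth atLeast0LessThan)

lemma int_chain:
  assumes "\<forall>i<m. (D::nat \<Rightarrow> int) i \<le> D (Suc i)" "a \<le> b" "b \<le> m"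
  shows "D a \<le> D b"
  using assms(2,3)
proof (induction b)
  case 0 then show ?case by simp
next
  case (Suc b)
  show ?case
  proof (cases "a = Suc b")
    case True then show ?thesis by simp
  next
    case False
    then have "D a \<le> D b" using Suc by simp
    also have "D b \<le> D (Suc b)" using assms(1) Suc.prems by simp
    finally show ?thesis .
  qed
qed

lemma minus_deg:
  assumes MR: "multi_reedy C M P deg" and F: "F \<in> ThetaMinus C M"
  shows "ThetaDeg deg (ttgt F) \<le> ThetaDeg deg (tsrc F) \<and>
     (ThetaDeg deg (tsrc F) = ThetaDeg deg (ttgt F) \<longleftrightarrow> F = theta_id C (tsrc F))"
proof -
  have cat: "is_category C" using MR unfolding multi_reedy_def by (elim conjE) assumption
  have degM: "\<forall>f\<in>M. deg (Cod C f) \<le> deg (Dom C f) \<and> (deg (Dom C f) = deg (Cod C f) \<longleftrightarrow> f = Id C (Dom C f))"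
    using MR unfolding multi_reedy_def by (elim conjE) assumption
  have A: "F \<in> theta_arrows C" by (rule minusD(1)[OF F])
  define cs where "cs = tsrc F" define ds where "ds = ttgt F" define \<alpha> where "\<alpha> = tmap F"
  define m where "m = length cs" define n where "n = length ds"
  define Sc where "Sc i = (\<Sum>t<i. deg (cs ! t))" for i
  define Sd where "Sd j = (\<Sum>t<j. deg (ds ! t))" for j
  define D where "D i = int (i + Sc i) - int (\<alpha> ! i + Sd (\<alpha> ! i))" for i
  have a0: "\<alpha> ! 0 = 0" using minus_0[OF F] unfolding \<alpha>_def .
  have am: "\<alpha> ! m = n" using minus_last[OF F] unfolding \<alpha>_def m_def n_def cs_def ds_def .
  have D0: "D 0 = 0" unfolding D_def Sc_def Sd_def using a0 by simp
  have Dm: "D m = int (ThetaDeg deg cs) - int (ThetaDeg deg ds)"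
    unfolding D_def Sc_def Sd_def ThetaDeg_def am using sum_list_map_nth[of deg cs] sum_list_map_nth[of deg ds]
    unfolding m_def n_def by simp
  define f where "f i = tcomp F ! i ! 0" for i
  have step: "\<And>i. i < m \<Longrightarrow> D i \<le> D (Suc i) \<and> (D i = D (Suc i) \<longrightarrow> \<alpha> ! Suc i = Suc (\<alpha> ! i) \<and> f i = Id C (cs ! i))"
  proof -
    fix i assume i: "i < m"
    have iF: "i < length (tsrc F)" using i unfolding m_def cs_def .
    have mo: "\<alpha> ! i \<le> \<alpha> ! Suc i" using arrow_mono[OF A] iF unfolding \<alpha>_def by simp
    have st: "\<alpha> ! Suc i \<le> Suc (\<alpha> ! i)" using minus_step[OF F iF] unfolding \<alpha>_def .
    have Sci: "Sc (Suc i) = Sc i + deg (cs ! i)" unfolding Sc_def by simp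
    show "D i \<le> D (Suc i) \<and> (D i = D (Suc i) \<longrightarrow> \<alpha> ! Suc i = Suc (\<alpha> ! i) \<and> f i = Id C (cs ! i))"
    proof (cases "\<alpha> ! Suc i = \<alpha> ! i")
      case True
      then have "D (Suc i) = D i + 1 + int (deg (cs ! i))" unfolding D_def Sci by simp
      then show ?thesis by simp
    next
      case False
      then have j: "\<alpha> ! Suc i = Suc (\<alpha> ! i)" using mo st by simp
      have lF: "length (tcomp F ! i) = 1" using arrowD(5)[OF A iF] j unfolding \<alpha>_def by simp
      have fM: "f i \<in> M" using minusD(3)[OF F iF] j unfolding f_def \<alpha>_def by simp
      have fa: "Dom C (f i) = cs ! i" "Cod C (f i) = ds ! (\<alpha> ! i)"
        using arrowD(6)[OF A iF, of 0] lF unfolding f_def cs_def ds_def \<alpha>_def by simp_all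
      have dg: "deg (Cod C (f i)) \<le> deg (Dom C (f i)) \<and> (deg (Dom C (f i)) = deg (Cod C (f i)) \<longleftrightarrow> f i = Id C (Dom C (f i)))"
        using degM fM by blast
      have Sdj: "Sd (\<alpha> ! Suc i) = Sd (\<alpha> ! i) + deg (ds ! (\<alpha> ! i))" unfolding Sd_def j by simp
      have "D (Suc i) = D i + int (deg (cs ! i)) - int (deg (ds ! (\<alpha> ! i)))"
        unfolding D_def Sci using Sdj j by simp
      then show ?thesis using dg fa j by auto
    qed
  qed
  have mono: "\<forall>i<m. D i \<le> D (Suc i)" using step by blast
  have Dmge: "D 0 \<le> D m" using int_chain[OF mono] by simp
  have le: "ThetaDeg deg ds \<le> ThetaDeg deg cs" using Dmge D0 Dm by simp
  have eqv: "ThetaDeg deg cs = ThetaDeg deg ds \<longleftrightarrow> F = theta_id C cs"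
  proof
    assume eq: "ThetaDeg deg cs = ThetaDeg deg ds"
    have alleq: "\<And>i. i < m \<Longrightarrow> \<alpha> ! Suc i = Suc (\<alpha> ! i) \<and> f i = Id C (cs ! i)"
    proof -
      fix i assume i: "i < m"
      have "D 0 \<le> D i" "D (Suc i) \<le> D m" using int_chain[OF mono] i by auto
      then have "D i = D (Suc i)" using step[OF i] D0 Dm eq by simp
      then show "\<alpha> ! Suc i = Suc (\<alpha> ! i) \<and> f i = Id C (cs ! i)" using step[OF i] by simp
    qed
    have aid: "\<And>i. i \<le> m \<Longrightarrow> \<alpha> ! i = i"
    proof -
      fix i show "i \<le> m \<Longrightarrow> \<alpha> ! i = i"
        by (induction i) (use a0 alleq in auto)
    qed
    have nm: "n = m" using aid[of m] am by simp
    have lenF: "\<And>i. i < m \<Longrightarrow> length (tcomp F ! i) = 1"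
      using arrowD(5)[OF A] alleq unfolding m_def cs_def \<alpha>_def by simp
    have cods: "\<And>i. i < m \<Longrightarrow> ds ! i = cs ! i"
    proof -
      fix i assume i: "i < m"
      have "Cod C (f i) = ds ! i" using arrowD(6)[OF A, of i 0] lenF[OF i] aid[of i] i
        unfolding f_def cs_def ds_def \<alpha>_def m_def by simp
      moreover have "cs ! i \<in> Ob C" using arrowD(1)[OF A] i unfolding cs_def m_def by auto
      ultimately show "ds ! i = cs ! i" using alleq[OF i] catD(2)[OF cat] by simp
    qed
    have tc: "tcomp F = map (\<lambda>c. [Id C c]) cs"
    proof (rule nth_equalityI)
      show "length (tcomp F) = length (map (\<lambda>c. [Id C c]) cs)" using arrowD(4)[OF A] unfolding cs_def by simp
      fix i assume "i < length (tcomp F)"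
      then have i: "i < m" using arrowD(4)[OF A] unfolding m_def cs_def by simp
      obtain g where "tcomp F ! i = [g]" using lenF[OF i] by (cases "tcomp F ! i") auto
      then show "tcomp F ! i = map (\<lambda>c. [Id C c]) cs ! i" using alleq[OF i] i unfolding f_def m_def by simp
    qed
    have tm: "tmap F = [0..<Suc m]"
      by (rule nth_equalityI) (use arrow_len[OF A] aid in \<open>simp_all add: \<alpha>_def m_def cs_def del: upt_Suc\<close>)
    have tg: "ttgt F = cs" unfolding ds_def[symmetric]
      by (rule nth_equalityI) (use nm cods in \<open>simp_all add: n_def m_def\<close>)
    show "F = theta_id C cs" by (rule tmor.equality) (simp_all add: theta_id_def tc tm tg cs_def m_def)
  next
    assume "F = theta_id C cs"
    then have "ds = ttgt (theta_id C cs)" unfolding ds_def by (rule arg_cong)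
    then have "ds = cs" by simp
    then show "ThetaDeg deg cs = ThetaDeg deg ds" by simp
  qed
  show ?thesis using le eqv unfolding cs_def ds_def by simp
qed


lemma sum_list_concat': "sum_list (concat xss) = sum_list (map sum_list (xss :: nat list list))"
  by (induction xss) auto

lemma sum_list_swap: "sum_list (map (\<lambda>x. \<Sum>i\<in>A. g x i) xs) = (\<Sum>i\<in>A. sum_list (map (\<lambda>x. g x i) xs) :: nat)"
  by (induction xs) (auto simp: sum.distrib)

lemma telescope:
  assumes "\<forall>i<m. (\<alpha>::nat list) ! i \<le> \<alpha> ! Suc i"
  shows "(\<Sum>i<m. \<Sum>j\<in>{\<alpha>!i..<\<alpha>!Suc i}. h j) = (\<Sum>j\<in>{\<alpha>!0..<\<alpha>!m}. (h j :: nat))"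
  using assms
proof (induction m)
  case 0 then show ?case by simp
next
  case (Suc m)
  have IH: "(\<Sum>i<m. \<Sum>j\<in>{\<alpha>!i..<\<alpha>!Suc i}. h j) = (\<Sum>j\<in>{\<alpha>!0..<\<alpha>!m}. h j)" using Suc by simp
  have a: "\<alpha>!0 \<le> \<alpha>!m" using mono_chain[of "Suc m" \<alpha> 0 m] Suc.prems by simp
  have b: "\<alpha>!m \<le> \<alpha>!Suc m" using Suc.prems by simp
  show ?case using IH sum.atLeastLessThan_concat[OF a b, of h] by simp
qed

lemma sum_list_strict_ex:
  "(\<And>x. x \<in> set xs \<Longrightarrow> (f x::nat) \<le> g x) \<Longrightarrow> x0 \<in> set xs \<Longrightarrow> f x0 < g x0 \<Longrightarrow>
     sum_list (map f xs) < sum_list (map g xs)"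
proof (induction xs)
  case Nil then show ?case by simp
next
  case (Cons a xs)
  show ?case
  proof (cases "x0 = a")
    case True
    have "sum_list (map f xs) \<le> sum_list (map g xs)" using Cons.prems sum_list_mono[of xs f g] by simp
    then show ?thesis using True Cons.prems by simp
  next
    case False
    then have "sum_list (map f xs) < sum_list (map g xs)" using Cons by simp
    then show ?thesis using Cons.prems(1)[of a] by simp
  qed
qed

lemma comp_deg:
  assumes F: "F \<in> theta_arrows C" and i: "i < length (tsrc F)"
  shows "sum_list (map (\<lambda>g. deg (Cod C g)) (tcomp F ! i)) = (\<Sum>j\<in>{tmap F!i..<tmap F!Suc i}. deg (ttgt F ! j))"
proof -
  have "map (\<lambda>g. deg (Cod C g)) (tcomp F ! i) = map (\<lambda>j. deg (ttgt F ! j)) [tmap F!i..<tmap F!Suc i]"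
    unfolding arrow_tcomp[OF F i] using arrow_cf[OF F i] by simp
  then show ?thesis by (simp add: sum_set_upt_conv_sum_list_nat[symmetric])
qed

context
  fixes C :: "('o, 'm) cat" and M P deg cs Fs
  assumes MR: "multi_reedy C M P deg" and TP: "(cs, Fs) \<in> ThetaPlus C P"
begin

lemma TP_mmor: "(cs, Fs) \<in> mmor (Theta C)" using TP unfolding ThetaPlus_def by simp
lemma TP_mf: "mono_family (length cs) (map tmap Fs)" using TP unfolding ThetaPlus_def by simp
lemma TP_P: "i < length cs \<Longrightarrow> (cs ! i, concat (map (\<lambda>F. tcomp F ! i) Fs)) \<in> P"
  using TP unfolding ThetaPlus_def by simp
lemma TP_arr: "F \<in> set Fs \<Longrightarrow> F \<in> theta_arrows C \<and> tsrc F = cs"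
  using TP_mmor unfolding mmor_iff by simp

lemma TP_len: "length cs \<le> sum_list (map (\<lambda>F. tmap F ! length cs - tmap F ! 0) Fs)"
proof -
  define T where "T i = sum_list (map (\<lambda>F. tmap F ! i) Fs)" for i
  have st: "\<And>i. i < length cs \<Longrightarrow> Suc (T i) \<le> T (Suc i)"
  proof -
    fix i assume i: "i < length cs"
    have "\<not> (\<forall>\<alpha>\<in>set (map tmap Fs). \<alpha> ! i = \<alpha> ! Suc i)"
      using TP_mf i unfolding mono_family_points by (metis Suc_leI less_imp_le_nat n_not_Suc_n)
    then obtain F where F: "F \<in> set Fs" "tmap F ! i \<noteq> tmap F ! Suc i" by auto
    have mo: "\<And>G. G \<in> set Fs \<Longrightarrow> tmap G ! i \<le> tmap G ! Suc i"
      using TP_arr arrow_mono i by fastforce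
    have "T i < T (Suc i)" unfolding T_def
      by (rule sum_list_strict_ex[OF mo F(1)]) (use F mo[OF F(1)] in simp_all)
    then show "Suc (T i) \<le> T (Suc i)" by simp
  qed
  have "\<And>i. i \<le> length cs \<Longrightarrow> i + T 0 \<le> T i"
  proof -
    fix i show "i \<le> length cs \<Longrightarrow> i + T 0 \<le> T i"
      by (induction i) (use st in \<open>auto intro: le_trans[OF _ st]\<close>)
  qed
  then have "length cs + T 0 \<le> T (length cs)" by simp
  moreover have "T (length cs) = sum_list (map (\<lambda>F. tmap F ! length cs - tmap F ! 0) Fs) + T 0"
  proof -
    have "\<And>F. F \<in> set Fs \<Longrightarrow> tmap F ! 0 \<le> tmap F ! length cs"
      using TP_arr mono_chain[OF arrow_mono] by fastforce
    then have "sum_list (map (\<lambda>F. tmap F ! length cs) Fs) = sum_list (map (\<lambda>F. tmap F ! length cs - tmap F ! 0 + tmap F ! 0) Fs)"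
      by (intro arg_cong[where f=sum_list] map_cong) auto
    then show ?thesis unfolding T_def by (simp add: sum_list_addf)
  qed
  ultimately show ?thesis by simp
qed

lemma TP_degs:
  "sum_list (map deg cs) \<le> sum_list (map (\<lambda>F. \<Sum>j\<in>{tmap F!0..<tmap F!length cs}. deg (ttgt F ! j)) Fs)"
proof -
  have degP: "\<forall>(c, fs)\<in>P. deg c \<le> sum_list (map (\<lambda>f. deg (Cod C f)) fs)"
    using MR unfolding multi_reedy_def by (elim conjE) assumption
  have "sum_list (map deg cs) = (\<Sum>i<length cs. deg (cs ! i))" by (rule sum_list_map_nth)
  also have "\<dots> \<le> (\<Sum>i<length cs. sum_list (map (\<lambda>F. \<Sum>j\<in>{tmap F!i..<tmap F!Suc i}. deg (ttgt F ! j)) Fs))"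
  proof (rule sum_mono)
    fix i assume "i \<in> {..<length cs}"
    then have i: "i < length cs" by simp
    have "deg (cs ! i) \<le> sum_list (map (\<lambda>f. deg (Cod C f)) (concat (map (\<lambda>F. tcomp F ! i) Fs)))"
      using degP TP_P[OF i] by blast
    also have "\<dots> = sum_list (map (\<lambda>F. sum_list (map (\<lambda>f. deg (Cod C f)) (tcomp F ! i))) Fs)"
      by (simp add: map_concat sum_list_concat' o_def)
    also have "\<dots> = sum_list (map (\<lambda>F. \<Sum>j\<in>{tmap F!i..<tmap F!Suc i}. deg (ttgt F ! j)) Fs)"
      by (intro arg_cong[where f=sum_list] map_cong refl) (use comp_deg TP_arr i in fastforce)
    finally show "deg (cs ! i) \<le> \<dots>" .
  qed
  also have "\<dots> = sum_list (map (\<lambda>F. \<Sum>i<length cs. \<Sum>j\<in>{tmap F!i..<tmap F!Suc i}. deg (ttgt F ! j)) Fs)"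
    by (rule sum_list_swap[symmetric])
  also have "\<dots> = sum_list (map (\<lambda>F. \<Sum>j\<in>{tmap F!0..<tmap F!length cs}. deg (ttgt F ! j)) Fs)"
    by (intro arg_cong[where f=sum_list] map_cong refl telescope) (use TP_arr arrow_mono in fastforce)
  finally show ?thesis .
qed

lemma TP_deg: "ThetaDeg deg cs \<le> sum_list (map (\<lambda>f. ThetaDeg deg (ttgt f)) Fs)"
proof -
  have a: "sum_list (map (\<lambda>F. tmap F ! length cs - tmap F ! 0) Fs) \<le> sum_list (map (\<lambda>F. length (ttgt F)) Fs)"
    by (rule sum_list_mono) (use TP_arr arrow_bound in fastforce)
  have b: "sum_list (map (\<lambda>F. \<Sum>j\<in>{tmap F!0..<tmap F!length cs}. deg (ttgt F ! j)) Fs)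
      \<le> sum_list (map (\<lambda>F. sum_list (map deg (ttgt F))) Fs)"
  proof (rule sum_list_mono)
    fix F assume F: "F \<in> set Fs"
    have "tmap F ! length cs \<le> length (ttgt F)" using TP_arr[OF F] arrow_bound by fastforce
    then have sub: "{tmap F!0..<tmap F!length cs} \<subseteq> {..<length (ttgt F)}" by auto
    have "(\<Sum>j\<in>{tmap F!0..<tmap F!length cs}. deg (ttgt F ! j)) \<le> (\<Sum>j<length (ttgt F). deg (ttgt F ! j))"
      using sum_mono2[OF finite_lessThan sub, of "\<lambda>j. deg (ttgt F ! j)"] by simp
    then show "(\<Sum>j\<in>{tmap F!0..<tmap F!length cs}. deg (ttgt F ! j)) \<le> sum_list (map deg (ttgt F))"
      by (simp add: sum_list_map_nth)
  qed
  show ?thesis unfolding ThetaDeg_def using TP_len TP_degs a b by (simp add: sum_list_addf)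
qed

end


lemma plus_id:
  assumes MR: "multi_reedy C M P deg" and A: "f \<in> theta_arrows C" and TP: "(tsrc f, [f]) \<in> ThetaPlus C P"
  shows "ThetaDeg deg (tsrc f) = ThetaDeg deg (ttgt f) \<longleftrightarrow> f = theta_id C (tsrc f)"
proof
  have cat: "is_category C" using MR unfolding multi_reedy_def by (elim conjE) assumption
  have degP: "\<forall>(c, fs)\<in>P. deg c \<le> sum_list (map (\<lambda>f. deg (Cod C f)) fs)"
    using MR unfolding multi_reedy_def by (elim conjE) assumption
  have idP: "\<forall>f\<in>Ar C. (Dom C f, [f]) \<in> P \<longrightarrow> (deg (Dom C f) = deg (Cod C f) \<longleftrightarrow> f = Id C (Dom C f))"
    using MR unfolding multi_reedy_def by (elim conjE) assumption
  define cs where "cs = tsrc f" define ds where "ds = ttgt f" define \<alpha> where "\<alpha> = tmap f"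
  define m where "m = length cs" define n where "n = length ds"
  have TP': "(cs, [f]) \<in> ThetaPlus C P" using TP unfolding cs_def .
  assume eq: "ThetaDeg deg (tsrc f) = ThetaDeg deg (ttgt f)"
  have l1: "m \<le> \<alpha> ! m - \<alpha> ! 0" using TP_len[OF MR TP'] unfolding m_def \<alpha>_def by simp
  have l2: "sum_list (map deg cs) \<le> (\<Sum>j\<in>{\<alpha>!0..<\<alpha>!m}. deg (ds ! j))"
    using TP_degs[OF MR TP'] unfolding m_def \<alpha>_def ds_def by simp
  have mono: "\<forall>i<m. \<alpha> ! i \<le> \<alpha> ! Suc i" using arrow_mono[OF A] unfolding m_def cs_def \<alpha>_def .
  have am: "\<alpha> ! m \<le> n" using arrow_bound[OF A] unfolding m_def cs_def \<alpha>_def n_def ds_def by simp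
  have a0m: "\<alpha> ! 0 \<le> \<alpha> ! m" using mono_chain[OF mono, of 0 m] by simp
  have sub: "(\<Sum>j\<in>{\<alpha>!0..<\<alpha>!m}. deg (ds ! j)) \<le> (\<Sum>j<n. deg (ds ! j))"
  proof -
    have "{\<alpha>!0..<\<alpha>!m} \<subseteq> {..<n}" using am by auto
    then show ?thesis using sum_mono2[OF finite_lessThan, of "{\<alpha>!0..<\<alpha>!m}" n "\<lambda>j. deg (ds ! j)"] by simp
  qed
  have Sd: "sum_list (map deg ds) = (\<Sum>j<n. deg (ds ! j))" unfolding n_def by (rule sum_list_map_nth)
  have Sc: "sum_list (map deg cs) = (\<Sum>j<m. deg (cs ! j))" unfolding m_def by (rule sum_list_map_nth)
  have eq': "m + sum_list (map deg cs) = n + sum_list (map deg ds)"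
    using eq unfolding ThetaDeg_def cs_def ds_def m_def n_def by simp
  have nm: "n = m" and a0: "\<alpha> ! 0 = 0" and amm: "\<alpha> ! m = m" and sums: "sum_list (map deg cs) = sum_list (map deg ds)"
    using l1 l2 am a0m sub Sd eq' by auto
  have strict: "\<And>i. i < m \<Longrightarrow> \<alpha> ! i < \<alpha> ! Suc i"
  proof -
    fix i assume i: "i < m"
    have "\<not> (\<forall>\<beta>\<in>set (map tmap [f]). \<beta> ! i = \<beta> ! Suc i)"
      using TP_mf[OF MR TP'] i unfolding mono_family_points m_def by (metis Suc_leI less_imp_le_nat n_not_Suc_n)
    then have "\<alpha> ! i \<noteq> \<alpha> ! Suc i" unfolding \<alpha>_def by simp
    then show "\<alpha> ! i < \<alpha> ! Suc i" using mono i by (meson le_neq_implies_less)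
  qed
  have up: "\<And>a b. a \<le> b \<Longrightarrow> b \<le> m \<Longrightarrow> \<alpha> ! a + (b - a) \<le> \<alpha> ! b"
  proof -
    fix a b :: nat assume ab: "a \<le> b" "b \<le> m"
    then show "\<alpha> ! a + (b - a) \<le> \<alpha> ! b"
    proof (induction b)
      case 0 then show ?case by simp
    next
      case (Suc b)
      show ?case
      proof (cases "a = Suc b")
        case True then show ?thesis by simp
      next
        case False
        then have "\<alpha> ! a + (b - a) \<le> \<alpha> ! b" using Suc by simp
        moreover have "\<alpha> ! b < \<alpha> ! Suc b" using strict Suc.prems by simp
        ultimately show ?thesis using False Suc.prems by simp
      qed
    qed
  qed
  have aid: "\<And>i. i \<le> m \<Longrightarrow> \<alpha> ! i = i"
  proof -
    fix i assume i: "i \<le> m"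
    have "\<alpha> ! 0 + (i - 0) \<le> \<alpha> ! i" using up[of 0 i] i by simp
    moreover have "\<alpha> ! i + (m - i) \<le> \<alpha> ! m" using up[of i m] i by simp
    ultimately show "\<alpha> ! i = i" using a0 amm i by simp
  qed
  define g where "g i = tcomp f ! i ! 0" for i
  have lenf: "\<And>i. i < m \<Longrightarrow> tcomp f ! i = [g i]"
  proof -
    fix i assume i: "i < m"
    have "length (tcomp f ! i) = 1" using arrowD(5)[OF A, of i] i aid[of i] aid[of "Suc i"]
      unfolding m_def cs_def \<alpha>_def by simp
    then show "tcomp f ! i = [g i]" unfolding g_def by (cases "tcomp f ! i") auto
  qed
  have ga: "\<And>i. i < m \<Longrightarrow> g i \<in> Ar C \<and> Dom C (g i) = cs ! i \<and> Cod C (g i) = ds ! i"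
    using arrowD(6)[OF A] lenf aid unfolding m_def cs_def ds_def \<alpha>_def g_def
    by (metis One_nat_def add.right_neutral length_Cons less_Suc_eq_le less_imp_le_nat list.size(3) zero_less_Suc)
  have gP: "\<And>i. i < m \<Longrightarrow> (cs ! i, [g i]) \<in> P" using TP_P[OF MR TP'] lenf unfolding m_def by simp
  have dle: "\<And>i. i < m \<Longrightarrow> deg (cs ! i) \<le> deg (ds ! i)"
    using degP gP ga by fastforce
  have deq: "\<And>i. i < m \<Longrightarrow> deg (cs ! i) = deg (ds ! i)"
  proof (rule ccontr)
    fix i assume i: "i < m" and ne: "deg (cs ! i) \<noteq> deg (ds ! i)"
    have "(\<Sum>j<m. deg (cs ! j)) < (\<Sum>j<m. deg (ds ! j))"
      by (rule sum_strict_mono_ex1) (use dle ne i in \<open>auto intro: le_neq_implies_less\<close>)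
    then show False using sums Sc Sd nm by simp
  qed
  have gid: "\<And>i. i < m \<Longrightarrow> g i = Id C (cs ! i)"
    using idP ga gP deq by fastforce
  have dseq: "\<And>i. i < m \<Longrightarrow> ds ! i = cs ! i"
  proof -
    fix i assume i: "i < m"
    have "cs ! i \<in> Ob C" using arrowD(1)[OF A] i unfolding cs_def m_def by auto
    then show "ds ! i = cs ! i" using ga[OF i] gid[OF i] catD(2)[OF cat] by metis
  qed
  have tg: "ttgt f = cs" unfolding ds_def[symmetric]
    by (rule nth_equalityI) (use nm dseq in \<open>simp_all add: n_def m_def\<close>)
  have tm: "tmap f = [0..<Suc m]"
    by (rule nth_equalityI) (use arrow_len[OF A] aid in \<open>simp_all add: \<alpha>_def m_def cs_def del: upt_Suc\<close>)
  have tc: "tcomp f = map (\<lambda>c. [Id C c]) cs"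
    by (rule nth_equalityI) (use arrowD(4)[OF A] lenf gid in \<open>simp_all add: m_def cs_def\<close>)
  show "f = theta_id C (tsrc f)"
    by (rule tmor.equality) (simp_all add: theta_id_def tc tm tg cs_def m_def)
next
  assume "f = theta_id C (tsrc f)"
  then have "ttgt f = ttgt (theta_id C (tsrc f))" by (rule arg_cong)
  then show "ThetaDeg deg (tsrc f) = ThetaDeg deg (ttgt f)" by simp
qed


lemma zip_concat_map:
  "(\<forall>x\<in>set xs. length (A x) = length (B x)) \<Longrightarrow>
   zip (concat (map A xs)) (concat (map B xs)) = concat (map (\<lambda>x. zip (A x) (B x)) xs)"
  by (induction xs) (auto simp: zip_append)

lemma mset_exchange:
  "mset (concat (map (\<lambda>a. concat (map (\<lambda>b. X a b) bs)) as)) =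
   mset (concat (map (\<lambda>b. concat (map (\<lambda>a. X a b) as)) bs))"
proof (induction as)
  case Nil then show ?case by (induction bs) auto
next
  case (Cons a as)
  have "mset (concat (map (\<lambda>b. concat (map (\<lambda>a'. X a' b) (a # as))) bs)) =
        mset (concat (map (X a) bs)) + mset (concat (map (\<lambda>b. concat (map (\<lambda>a'. X a' b) as)) bs))"
    by (induction bs) (auto simp: algebra_simps)
  then show ?case using Cons by simp
qed

lemma mset_concat_cong:
  "(\<And>x. x \<in> set xs \<Longrightarrow> mset (A x) = mset (B x)) \<Longrightarrow> mset (concat (map A xs)) = mset (concat (map B xs))"
  by (induction xs) auto

lemma concat_concat': "concat (concat xss) = concat (map concat xss)"
  by (induction xss) auto

lemma cmp_tcomp_alt:
  assumes F: "F \<in> theta_arrows C" and i: "i < length (tsrc F)"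
  shows "tcomp (theta_cmp C G F) ! i =
     concat (map (\<lambda>j. map (\<lambda>g. Cmp C g (cf F j)) (tcomp G ! j)) [tmap F!i..<tmap F!Suc i])"
  unfolding cmp_comp[OF i] arrow_tcomp[OF F i] zip_map1 zip_same_conv_map by (simp add: o_def)

lemma plus_comp:
  fixes C :: "('o, 'm) cat"
  assumes MR: "multi_reedy C M P deg" and TP: "(c, fs) \<in> ThetaPlus C P"
    and len: "length gss = length fs"
    and Gs: "\<forall>s<length fs. (ttgt (fs ! s), gss ! s) \<in> ThetaPlus C P"
  shows "mcomp (Theta C) (c, fs) gss \<in> ThetaPlus C P"
proof -
  have cat: "is_category C" using MR unfolding multi_reedy_def by (elim conjE) assumption
  have wsP: "wide_submulticat C P" using MR unfolding multi_reedy_def by (elim conjE) assumption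
  have Pcomp: "\<forall>c fs gss. (c, fs) \<in> P \<longrightarrow> length gss = length fs \<longrightarrow>
        (\<forall>s<length fs. (Cod C (fs ! s), gss ! s) \<in> P) \<longrightarrow> mcomp C (c, fs) gss \<in> P"
    using wsP unfolding wide_submulticat_def by (elim conjE) assumption
  have Pperm: "\<forall>c fs gs. (c, fs) \<in> P \<longrightarrow> mset gs = mset fs \<longrightarrow> (c, gs) \<in> P"
    using wsP unfolding wide_submulticat_def by (elim conjE) assumption
  define u where "u = length fs"
  define m where "m = length c"
  have Fa: "\<And>s. s < u \<Longrightarrow> fs ! s \<in> theta_arrows C \<and> tsrc (fs ! s) = c"
    using TP_arr[OF MR TP] u_def by simp
  have Ga: "\<And>s G. s < u \<Longrightarrow> G \<in> set (gss ! s) \<Longrightarrow> G \<in> theta_arrows C \<and> tsrc G = ttgt (fs ! s)"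
    using TP_arr[OF MR] Gs u_def by blast
  define Hs where "Hs = concat (map (\<lambda>s. map (\<lambda>G. theta_cmp C G (fs ! s)) (gss ! s)) [0..<u])"
  have zz: "zip fs gss = map (\<lambda>s. (fs ! s, gss ! s)) [0..<u]"
    by (rule nth_equalityI) (simp_all add: len u_def)
  have mc: "mcomp (Theta C) (c, fs) gss = (c, Hs)"
    unfolding mcomp_def Hs_def by (simp add: zz o_def)
  have Hset: "\<And>H. H \<in> set Hs \<Longrightarrow> \<exists>s<u. \<exists>G\<in>set (gss ! s). H = theta_cmp C G (fs ! s)"
    unfolding Hs_def by auto
  have mm: "(c, Hs) \<in> mmor (Theta C)"
    unfolding mmor_iff Theta_sel
  proof (intro conjI ballI)
    show "c \<in> {cs. set cs \<subseteq> Ob C}" using TP_mmor[OF MR TP] unfolding mmor_iff by simp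
    fix H assume "H \<in> set Hs"
    then obtain s G where sG: "s < u" "G \<in> set (gss ! s)" "H = theta_cmp C G (fs ! s)" using Hset by blast
    show "H \<in> theta_arrows C" "tsrc H = c"
      using cmp_arrow[OF cat, of "fs ! s" G] Fa[OF sG(1)] Ga[OF sG(1,2)] sG(3) by auto
  qed
  have mf: "mono_family (length c) (map tmap Hs)"
    unfolding mono_family_points
  proof (intro allI impI)
    fix k k' assume k: "k \<le> length c" "k' \<le> length c" and e: "\<forall>\<alpha>\<in>set (map tmap Hs). \<alpha> ! k = \<alpha> ! k'"
    have "\<forall>\<alpha>\<in>set (map tmap fs). \<alpha> ! k = \<alpha> ! k'"
    proof
      fix \<alpha> assume "\<alpha> \<in> set (map tmap fs)"
      then obtain s where s: "s < u" "\<alpha> = tmap (fs ! s)" unfolding u_def by (auto simp: in_set_conv_nth)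
      have lF: "length (tmap (fs ! s)) = Suc (length c)" using arrow_len Fa[OF s(1)] by fastforce
      have bk: "tmap (fs ! s) ! k \<le> length (ttgt (fs ! s))" "tmap (fs ! s) ! k' \<le> length (ttgt (fs ! s))"
        using arrow_bound Fa[OF s(1)] k by fastforce+
      have "\<forall>\<beta>\<in>set (map tmap (gss ! s)). \<beta> ! (tmap (fs ! s) ! k) = \<beta> ! (tmap (fs ! s) ! k')"
      proof
        fix \<beta> assume "\<beta> \<in> set (map tmap (gss ! s))"
        then obtain G where G: "G \<in> set (gss ! s)" "\<beta> = tmap G" by auto
        have "theta_cmp C G (fs ! s) \<in> set Hs" unfolding Hs_def using s G by auto
        then have "tmap (theta_cmp C G (fs ! s)) ! k = tmap (theta_cmp C G (fs ! s)) ! k'"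
          using e by (simp del: cmp_sel)
        then show "\<beta> ! (tmap (fs ! s) ! k) = \<beta> ! (tmap (fs ! s) ! k')" using G lF k by simp
      qed
      then have "tmap (fs ! s) ! k = tmap (fs ! s) ! k'"
        using TP_mf[OF MR] Gs s bk unfolding mono_family_points u_def by blast
      then show "\<alpha> ! k = \<alpha> ! k'" using s by simp
    qed
    then show "k = k'" using TP_mf[OF MR TP] k unfolding mono_family_points by blast
  qed
  have pc: "\<forall>i<length c. (c ! i, concat (map (\<lambda>F. tcomp F ! i) Hs)) \<in> P"
  proof (intro allI impI)
    fix i assume i: "i < length c"
    define blk where "blk s = [tmap (fs ! s) ! i..<tmap (fs ! s) ! Suc i]" for s
    define X where "X s (G :: ('o, 'm) tmor) j = map (\<lambda>g. Cmp C g (cf (fs ! s) j)) (tcomp G ! j)" for s G j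
    define L1 where "L1 = concat (map (\<lambda>s. concat (map (\<lambda>G. concat (map (\<lambda>j. X s G j) (blk s))) (gss ! s))) [0..<u])"
    define L2 where "L2 = concat (map (\<lambda>s. concat (map (\<lambda>j. concat (map (\<lambda>G. X s G j) (gss ! s))) (blk s))) [0..<u])"
    define fsi where "fsi = concat (map (\<lambda>s. map (cf (fs ! s)) (blk s)) [0..<u])"
    define gss' where "gss' = concat (map (\<lambda>s. map (\<lambda>j. concat (map (\<lambda>G. tcomp G ! j) (gss ! s))) (blk s)) [0..<u])"
    have iF: "\<And>s. s < u \<Longrightarrow> i < length (tsrc (fs ! s))" using Fa i by simp
    have L1e: "concat (map (\<lambda>F. tcomp F ! i) Hs) = L1"
    proof -
      have "\<And>s G. s < u \<Longrightarrow> tcomp (theta_cmp C G (fs ! s)) ! i = concat (map (\<lambda>j. X s G j) (blk s))"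
        unfolding X_def blk_def using cmp_tcomp_alt Fa iF by blast
      then show ?thesis unfolding Hs_def L1_def
        by (simp add: map_concat o_def concat_concat') (intro arg_cong[where f=concat] map_cong refl, simp)
    qed
    have fsie: "fsi = concat (map (\<lambda>F. tcomp F ! i) fs)"
    proof -
      have "map (\<lambda>s. tcomp (fs ! s) ! i) [0..<u] = map (\<lambda>F. tcomp F ! i) fs"
        unfolding u_def by (rule nth_equalityI) simp_all
      then have "concat (map (\<lambda>F. tcomp F ! i) fs) = concat (map (\<lambda>s. tcomp (fs ! s) ! i) [0..<u])"
        by simp
      also have "\<dots> = fsi" unfolding fsi_def
      proof (intro arg_cong[where f=concat] map_cong refl)
        fix s assume "s \<in> set [0..<u]"
        then have s: "s < u" by simp
        show "tcomp (fs ! s) ! i = map (cf (fs ! s)) (blk s)"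
          unfolding blk_def using arrow_tcomp[of "fs ! s" C i] Fa[OF s] iF[OF s] by simp
      qed
      finally show ?thesis by simp
    qed
    have zipe: "zip fsi gss' = concat (map (\<lambda>s. map (\<lambda>j. (cf (fs ! s) j, concat (map (\<lambda>G. tcomp G ! j) (gss ! s)))) (blk s)) [0..<u])"
      unfolding fsi_def gss'_def by (subst zip_concat_map) (simp_all add: zip_map1 zip_map2 zip_same_conv_map o_def)
    have lens: "length gss' = length fsi" unfolding fsi_def gss'_def by (simp add: length_concat o_def)
    have mcC: "mcomp C (c ! i, fsi) gss' = (c ! i, L2)"
      unfolding mcomp_def L2_def X_def by (simp add: zipe map_concat o_def concat_concat')
    have fsiP: "(c ! i, fsi) \<in> P" using TP_P[OF MR TP i] fsie by simp
    have zipP: "\<And>f gs. (f, gs) \<in> set (zip fsi gss') \<Longrightarrow> (Cod C f, gs) \<in> P"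
    proof -
      fix f gs assume "(f, gs) \<in> set (zip fsi gss')"
      then obtain s j where sj: "s < u" "j \<in> set (blk s)" "f = cf (fs ! s) j"
          "gs = concat (map (\<lambda>G. tcomp G ! j) (gss ! s))" unfolding zipe by auto
      have jb: "tmap (fs ! s) ! i \<le> j" "j < tmap (fs ! s) ! Suc i" using sj(2) unfolding blk_def by auto
      have cod: "Cod C f = ttgt (fs ! s) ! j" using arrow_cf[of "fs ! s" C i j] Fa[OF sj(1)] iF[OF sj(1)] jb sj(3) by simp
      have "tmap (fs ! s) ! Suc i \<le> length (ttgt (fs ! s))" using arrow_bound[of "fs ! s" C "Suc i"] Fa[OF sj(1)] i by simp
      then have jn: "j < length (ttgt (fs ! s))" using jb by simp
      show "(Cod C f, gs) \<in> P" using TP_P[OF MR, of "ttgt (fs ! s)" "gss ! s" j] Gs sj(1,4) jn cod unfolding u_def by simp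
    qed
    have allP: "\<forall>t<length fsi. (Cod C (fsi ! t), gss' ! t) \<in> P"
    proof (intro allI impI)
      fix t assume "t < length fsi"
      then have "(fsi ! t, gss' ! t) \<in> set (zip fsi gss')" using lens by (auto simp: in_set_zip)
      then show "(Cod C (fsi ! t), gss' ! t) \<in> P" by (rule zipP)
    qed
    have L2P: "(c ! i, L2) \<in> P" using Pcomp fsiP lens allP mcC by metis
    have "mset L1 = mset L2" unfolding L1_def L2_def
      by (rule mset_concat_cong) (rule mset_exchange)
    then have "(c ! i, L1) \<in> P" using Pperm L2P by blast
    then show "(c ! i, concat (map (\<lambda>F. tcomp F ! i) Hs)) \<in> P" using L1e by simp
  qed
  show ?thesis unfolding mc ThetaPlus_def using mm mf pc by simp
qed


lemma plus_wide:
  fixes C :: "('o, 'm) cat"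
  assumes MR: "multi_reedy C M P deg"
  shows "wide_submulticat (Theta C) (ThetaPlus C P)"
proof -
  have cat: "is_category C" using MR unfolding multi_reedy_def by (elim conjE) assumption
  have wsP: "wide_submulticat C P" using MR unfolding multi_reedy_def by (elim conjE) assumption
  have Pid: "\<forall>c\<in>Ob C. (c, [Id C c]) \<in> P" using wsP unfolding wide_submulticat_def by (elim conjE) assumption
  have Pperm: "\<forall>c fs gs. (c, fs) \<in> P \<longrightarrow> mset gs = mset fs \<longrightarrow> (c, gs) \<in> P"
    using wsP unfolding wide_submulticat_def by (elim conjE) assumption
  have 1: "ThetaPlus C P \<subseteq> mmor (Theta C)" unfolding ThetaPlus_def by auto
  have 2: "\<forall>c\<in>Ob (Theta C). (c, [Id (Theta C) c]) \<in> ThetaPlus C P"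
  proof
    fix c assume "c \<in> Ob (Theta C)"
    then have c: "set c \<subseteq> Ob C" by simp
    have mm: "(c, [theta_id C c]) \<in> mmor (Theta C)" unfolding mmor_iff using c id_arrow[OF cat c] by simp
    have mf: "mono_family (length c) (map tmap [theta_id C c])"
      unfolding mono_family_points by (simp del: upt_Suc)
    have pc: "\<forall>i<length c. (c ! i, concat (map (\<lambda>F. tcomp F ! i) [theta_id C c])) \<in> P"
      using Pid c by (auto simp: theta_id_def subset_code(1))
    show "(c, [Id (Theta C) c]) \<in> ThetaPlus C P" unfolding ThetaPlus_def using mm mf pc by simp
  qed
  have 3: "\<forall>c fs gss. (c, fs) \<in> ThetaPlus C P \<longrightarrow> length gss = length fs \<longrightarrow>
        (\<forall>s<length fs. (Cod (Theta C) (fs ! s), gss ! s) \<in> ThetaPlus C P) \<longrightarrow> mcomp (Theta C) (c, fs) gss \<in> ThetaPlus C P"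
    using plus_comp[OF MR] by simp
  have 4: "\<forall>c fs gs. (c, fs) \<in> ThetaPlus C P \<longrightarrow> mset gs = mset fs \<longrightarrow> (c, gs) \<in> ThetaPlus C P"
  proof (intro allI impI)
    fix c fs gs assume TP: "(c, fs) \<in> ThetaPlus C P" and ms: "mset gs = mset fs"
    have st: "set gs = set fs" using ms by (metis set_mset_mset)
    have mm: "(c, gs) \<in> mmor (Theta C)" using TP_mmor[OF MR TP] st unfolding mmor_iff by simp
    have mf: "mono_family (length c) (map tmap gs)" using TP_mf[OF MR TP] st unfolding mono_family_def by simp
    have pc: "\<forall>i<length c. (c ! i, concat (map (\<lambda>F. tcomp F ! i) gs)) \<in> P"
    proof (intro allI impI)
      fix i assume i: "i < length c"
      have "mset (concat (map (\<lambda>F. tcomp F ! i) gs)) = mset (concat (map (\<lambda>F. tcomp F ! i) fs))"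
      proof -
        have e: "\<And>xs. sum_list (map (\<lambda>F. mset (tcomp F ! i)) xs) = sum_mset (image_mset (\<lambda>F. mset (tcomp F ! i)) (mset xs))"
          by (metis mset_map sum_mset_sum_list)
        show ?thesis unfolding mset_concat map_map o_def using e[of gs] e[of fs] ms by simp
      qed
      then show "(c ! i, concat (map (\<lambda>F. tcomp F ! i) gs)) \<in> P" using Pperm TP_P[OF MR TP i] by blast
    qed
    show "(c, gs) \<in> ThetaPlus C P" unfolding ThetaPlus_def using mm mf pc by simp
  qed
  show ?thesis unfolding wide_submulticat_def using 1 2 3 4 by (intro conjI)
qed

theorem mainTheorem2:
  fixes C :: "('o, 'm) cat" and M :: "'m set" and P :: "('o \<times> 'm list) set" and deg :: "'o \<Rightarrow> nat"
  assumes "multi_reedy C M P deg"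
  shows "multi_reedy (Theta C) (ThetaMinus C M) (ThetaPlus C P) (ThetaDeg deg) \<and>
         (\<exists>Mm Mp d. reedy (Theta C) Mm Mp d)"
proof -
  note MR = assms
  have cat: "is_category C" using MR unfolding multi_reedy_def by (elim conjE) assumption
  have a1: "is_category (Theta C)" by (rule theta_category[OF cat])
  have a2: "wide_subcat (Theta C) (ThetaMinus C M)" by (rule minus_wide[OF MR])
  have a3: "wide_submulticat (Theta C) (ThetaPlus C P)" by (rule plus_wide[OF MR])
  have a4: "\<forall>(c, fs)\<in>mmor (Theta C). \<exists>!(a, ps). a \<in> ThetaMinus C M \<and> Dom (Theta C) a = c \<and>
     (Cod (Theta C) a, ps) \<in> ThetaPlus C P \<and> map (Cod (Theta C)) ps = map (Cod (Theta C)) fs \<and>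
     fs = map (\<lambda>p. Cmp (Theta C) p a) ps" by (rule theta_fact[OF MR])
  have a5: "\<forall>(c, fs)\<in>ThetaPlus C P. ThetaDeg deg c \<le> sum_list (map (\<lambda>f. ThetaDeg deg (Cod (Theta C) f)) fs)"
    using TP_deg[OF MR] by auto
  have a6: "\<forall>f\<in>Ar (Theta C). (Dom (Theta C) f, [f]) \<in> ThetaPlus C P \<longrightarrow>
         (ThetaDeg deg (Dom (Theta C) f) = ThetaDeg deg (Cod (Theta C) f) \<longleftrightarrow> f = Id (Theta C) (Dom (Theta C) f))"
    using plus_id[OF MR] by simp
  have a7: "\<forall>f\<in>ThetaMinus C M. ThetaDeg deg (Cod (Theta C) f) \<le> ThetaDeg deg (Dom (Theta C) f) \<and>
         (ThetaDeg deg (Dom (Theta C) f) = ThetaDeg deg (Cod (Theta C) f) \<longleftrightarrow> f = Id (Theta C) (Dom (Theta C) f))"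
    using minus_deg[OF MR] by simp
  have TR: "multi_reedy (Theta C) (ThetaMinus C M) (ThetaPlus C P) (ThetaDeg deg)"
    unfolding multi_reedy_def using a1 a2 a3 a4 a5 a6 a7 by (intro conjI)
  show ?thesis using TR mr_reedy[OF TR] by blast
qed


end
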